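(* For integers $g\ge 0$ and $h,m\ge 1$, let $S^0_{gh}(K_m)$ be the graph obtained from the complete graph $K_m$ by attaching, at one vertex $u$, two pendant paths of lengths $g$ and $h$ that are disjoint except at $u$. Then \[ X_{S_{gh}^0(K_m)}=(m-1)!\Bigg(\sum_{z=0}^{m-1}e_z\,X_{P_{g+h+m-z}}-\sum_{z=1}^{m-1}\frac{X_{K_z^h}}{(z-1)!}\,X_{P_{g+m-z}}\Bigg). \]
   Context: All graphs are finite simple graphs. The chromatic symmetric function of a graph $G$ is $X_G=\sum_{\kappa}\prod_{v\in V(G)}x_{\kappa(v)}$, where $\kappa$ ranges over proper colorings $\kappa:V(G)\to\{1,2,\dots\}$; $e_z$ is the $z$-th elementary symmetric function, $e_0=1$. $P_j$ is the path on $j$ vertices. $K_z^h$ is the lollipop: the complete graph $K_z$ with a pendant path of length $h$ (with $h$ new vertices) attached at one vertex. *)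

theory Defs
  imports Complex_Main "HOL-Library.Poly_Mapping" "HOL-Library.FuncSet"
begin

text \<open>Formal power series in the countably many variables x_0, x_1, ... with rational
coefficients: a series is its coefficient function on monomials (exponent vectors,
finitely supported functions nat to nat).\<close>

type_synonym sfun = "(nat \<Rightarrow>\<^sub>0 nat) \<Rightarrow> rat"

definition sf_mult :: "sfun \<Rightarrow> sfun \<Rightarrow> sfun" where
  "sf_mult f g = (\<lambda>\<alpha>. \<Sum>(\<beta>, \<gamma>) \<in> {(\<beta>, \<gamma>). \<beta> + \<gamma> = \<alpha>}. f \<beta> * g \<gamma>)"

definition proper_colorings :: "'a set \<Rightarrow> ('a \<Rightarrow> 'a \<Rightarrow> bool) \<Rightarrow> ('a \<Rightarrow> nat) set" where
  "proper_colorings V E = {\<kappa> \<in> V \<rightarrow>\<^sub>E UNIV. \<forall>u\<in>V. \<forall>v\<in>V. E u v \<longrightarrow> \<kappa> u \<noteq> \<kappa> v}"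

definition chrom_sym :: "'a set \<Rightarrow> ('a \<Rightarrow> 'a \<Rightarrow> bool) \<Rightarrow> sfun" where
  "chrom_sym V E = (\<lambda>\<alpha>. of_nat (card {\<kappa> \<in> proper_colorings V E.
        \<forall>i. card {v \<in> V. \<kappa> v = i} = Poly_Mapping.lookup \<alpha> i}))"

definition elem_sym :: "nat \<Rightarrow> sfun" where
  "elem_sym z = (\<lambda>\<alpha>. if (\<forall>i. Poly_Mapping.lookup \<alpha> i \<le> 1) \<and> (\<Sum>i\<in>Poly_Mapping.keys \<alpha>. Poly_Mapping.lookup \<alpha> i) = z then 1 else 0)"

definition path_V :: "nat \<Rightarrow> nat set" where "path_V j = {0..<j}"
definition path_E :: "nat \<Rightarrow> nat \<Rightarrow> bool" where "path_E u v \<longleftrightarrow> u + 1 = v \<or> v + 1 = u"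

text \<open>Lollipop K_z^h: path 0,1,...,h (length h) and the clique K_z on {0} \<union> {h+1..<h+z}.\<close>
definition lollipop_V :: "nat \<Rightarrow> nat \<Rightarrow> nat set" where "lollipop_V z h = {0..<h+z}"
definition lollipop_E :: "nat \<Rightarrow> nat \<Rightarrow> nat \<Rightarrow> nat \<Rightarrow> bool" where
  "lollipop_E z h u v \<longleftrightarrow>
     ((u \<le> h \<and> v \<le> h \<and> (u + 1 = v \<or> v + 1 = u)) \<or>
      (u \<in> insert 0 {h+1..<h+z} \<and> v \<in> insert 0 {h+1..<h+z} \<and> u \<noteq> v))"

text \<open>S^0_{gh}(K_m): path 0,1,...,g+h with u = g, the clique K_m on {g} \<union> {g+h+1..<g+h+m}.
So the pendant paths at u are g,g-1,...,0 (length g) and g,g+1,...,g+h (length h).\<close>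
definition spider_V :: "nat \<Rightarrow> nat \<Rightarrow> nat \<Rightarrow> nat set" where
  "spider_V g h m = {0..<g+h+m}"
definition spider_E :: "nat \<Rightarrow> nat \<Rightarrow> nat \<Rightarrow> nat \<Rightarrow> nat \<Rightarrow> bool" where
  "spider_E g h m u v \<longleftrightarrow>
     ((u \<le> g+h \<and> v \<le> g+h \<and> (u + 1 = v \<or> v + 1 = u)) \<or>
      (u \<in> insert g {g+h+1..<g+h+m} \<and> v \<in> insert g {g+h+1..<g+h+m} \<and> u \<noteq> v))"

end

theory Submission
  imports Defs
begin


definition cont :: "'a set \<Rightarrow> ('a \<Rightarrow> nat) \<Rightarrow> (nat \<Rightarrow>\<^sub>0 nat)" where
  "cont V \<kappa> = Abs_poly_mapping (\<lambda>i. card {v\<in>V. \<kappa> v = i})"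

definition ind :: "nat set \<Rightarrow> (nat \<Rightarrow>\<^sub>0 nat)" where
  "ind C = Abs_poly_mapping (\<lambda>i. if i \<in> C then 1 else 0)"

lemma lookup_cont:
  assumes "finite V"
  shows "Poly_Mapping.lookup (cont V \<kappa>) i = card {v\<in>V. \<kappa> v = i}"
proof -
  have "{i. card {v\<in>V. \<kappa> v = i} \<noteq> 0} \<subseteq> \<kappa> ` V"
    by (auto simp: card_eq_0_iff)
  then have "finite {i. card {v\<in>V. \<kappa> v = i} \<noteq> 0}"
    using assms finite_subset by blast
  from lookup_Abs_poly_mapping[OF this] show ?thesis unfolding cont_def by simp
qed

lemma lookup_ind:
  assumes "finite C"
  shows "Poly_Mapping.lookup (ind C) i = (if i \<in> C then 1 else 0)"
proof -
  have "{i. (if i \<in> C then 1 else 0::nat) \<noteq> 0} = C" by auto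
  then have "finite {i. (if i \<in> C then 1 else 0::nat) \<noteq> 0}" using assms by simp
  from lookup_Abs_poly_mapping[OF this] show ?thesis unfolding ind_def by simp
qed

lemma cont_cong:
  assumes "\<And>v. v \<in> V \<Longrightarrow> \<kappa> v = \<kappa>' v"
  shows "cont V \<kappa> = cont V \<kappa>'"
proof -
  have "\<And>i. {v\<in>V. \<kappa> v = i} = {v\<in>V. \<kappa>' v = i}" using assms by auto
  then show ?thesis unfolding cont_def by simp
qed

lemma cont_union:
  fixes \<kappa> :: "'a \<Rightarrow> nat"
  assumes "finite A" "finite B" "A \<inter> B = {}"
  shows "cont (A \<union> B) \<kappa> = cont A \<kappa> + cont B \<kappa>"
proof (rule poly_mapping_eqI)
  fix i
  have "{v\<in>A \<union> B. \<kappa> v = i} = {v\<in>A. \<kappa> v = i} \<union> {v\<in>B. \<kappa> v = i}" by auto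
  then have "card {v\<in>A \<union> B. \<kappa> v = i} = card {v\<in>A. \<kappa> v = i} + card {v\<in>B. \<kappa> v = i}"
    using assms by (simp add: card_Un_disjoint disjoint_iff)
  then show "Poly_Mapping.lookup (cont (A \<union> B) \<kappa>) i = Poly_Mapping.lookup (cont A \<kappa> + cont B \<kappa>) i"
    using assms by (simp only: lookup_cont lookup_add finite_Un)
qed

lemma cont_image:
  fixes \<kappa> :: "'a \<Rightarrow> nat"
  assumes "finite A" "inj_on f A"
  shows "cont (f ` A) \<kappa> = cont A (\<lambda>v. \<kappa> (f v))"
proof (rule poly_mapping_eqI)
  fix i
  have "{v\<in>f ` A. \<kappa> v = i} = f ` {v\<in>A. \<kappa> (f v) = i}" by auto
  moreover have "inj_on f {v\<in>A. \<kappa> (f v) = i}" using assms(2) by (rule inj_on_subset) auto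
  ultimately have "card {v\<in>f ` A. \<kappa> v = i} = card {v\<in>A. \<kappa> (f v) = i}"
    by (simp add: card_image)
  then show "Poly_Mapping.lookup (cont (f ` A) \<kappa>) i = Poly_Mapping.lookup (cont A (\<lambda>v. \<kappa> (f v))) i"
    using assms by (simp only: lookup_cont finite_imageI)
qed

lemma cont_single: "cont {a} (\<kappa>::_\<Rightarrow>nat) = Poly_Mapping.single (\<kappa> a) 1"
proof (rule poly_mapping_eqI)
  fix i
  show "Poly_Mapping.lookup (cont {a} \<kappa>) i = Poly_Mapping.lookup (Poly_Mapping.single (\<kappa> a) 1) i"
  proof (cases "\<kappa> a = i")
    case True
    then have "{v\<in>{a}. \<kappa> v = i} = {a}" by auto
    then show ?thesis using True by (simp add: lookup_cont lookup_single)
  next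
    case False
    then have "{v\<in>{a}. \<kappa> v = i} = {}" by auto
    then show ?thesis using False by (simp add: lookup_cont lookup_single)
  qed
qed

lemma cont_insert:
  assumes "finite V" "a \<notin> V"
  shows "cont (insert a V) \<kappa> = cont V \<kappa> + Poly_Mapping.single (\<kappa> a) 1"
proof -
  have "insert a V = V \<union> {a}" by auto
  then show ?thesis using assms cont_union[of V "{a}" \<kappa>] by (simp add: cont_single)
qed

lemma cont_empty: "cont {} \<kappa> = 0"
  by (rule poly_mapping_eqI) (simp add: lookup_cont)

lemma ind_empty: "ind {} = 0"
  by (rule poly_mapping_eqI) (simp add: lookup_ind)

lemma ind_insert:
  assumes "finite C" "a \<notin> C"
  shows "ind (insert a C) = ind C + Poly_Mapping.single a 1"
  by (rule poly_mapping_eqI) (use assms in \<open>auto simp: lookup_ind lookup_add lookup_single when_def\<close>)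

lemma cont_inj:
  fixes \<kappa> :: "'a \<Rightarrow> nat"
  assumes "finite W" "inj_on \<kappa> W"
  shows "cont W \<kappa> = ind (\<kappa> ` W)"
proof (rule poly_mapping_eqI)
  fix i
  have "card {v\<in>W. \<kappa> v = i} = (if i \<in> \<kappa> ` W then 1 else 0)"
  proof (cases "i \<in> \<kappa> ` W")
    case True
    then obtain w where w: "w \<in> W" "\<kappa> w = i" by auto
    then have "{v\<in>W. \<kappa> v = i} = {w}" using assms(2) by (auto simp: inj_on_def)
    then show ?thesis using True by simp
  next
    case False
    then have "{v\<in>W. \<kappa> v = i} = {}" by auto
    then show ?thesis using False by (simp only: card.empty) simp
  qed
  then show "Poly_Mapping.lookup (cont W \<kappa>) i = Poly_Mapping.lookup (ind (\<kappa> ` W)) i"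
    using assms by (simp add: lookup_cont lookup_ind)
qed

lemma ind_keys:
  assumes "finite C"
  shows "Poly_Mapping.keys (ind C) = C"
  using assms by (auto simp: in_keys_iff lookup_ind split: if_splits)

lemma cont_keys:
  fixes X :: "nat \<Rightarrow>\<^sub>0 nat"
  assumes "finite V" "v \<in> V"
  shows "\<kappa> v \<in> Poly_Mapping.keys (cont V \<kappa> + X)"
proof -
  have "{w\<in>V. \<kappa> w = \<kappa> v} \<noteq> {}" using assms by auto
  then have "card {w\<in>V. \<kappa> w = \<kappa> v} \<noteq> 0" using assms by simp
  then show ?thesis using assms by (simp only: in_keys_iff lookup_add lookup_cont)
qed

lemma ind_keys2:
  fixes X :: "nat \<Rightarrow>\<^sub>0 nat"
  assumes "finite C" "c \<in> C"
  shows "c \<in> Poly_Mapping.keys (X + ind C)"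
  using assms by (simp only: in_keys_iff lookup_add lookup_ind) simp

lemma chrom_sym_cont:
  assumes "finite V"
  shows "chrom_sym V E \<alpha> = of_nat (card {\<kappa>\<in>proper_colorings V E. cont V \<kappa> = \<alpha>})"
proof -
  have "(\<forall>i. card {v \<in> V. \<kappa> v = i} = Poly_Mapping.lookup \<alpha> i) \<longleftrightarrow> cont V \<kappa> = \<alpha>" for \<kappa>
  proof -
    have "(\<forall>i. card {v \<in> V. \<kappa> v = i} = Poly_Mapping.lookup \<alpha> i) \<longleftrightarrow>
          (\<forall>i. Poly_Mapping.lookup (cont V \<kappa>) i = Poly_Mapping.lookup \<alpha> i)"
      by (simp only: lookup_cont[OF assms])
    also have "\<dots> \<longleftrightarrow> cont V \<kappa> = \<alpha>"
      by (metis poly_mapping_eqI)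
    finally show ?thesis .
  qed
  then show ?thesis unfolding chrom_sym_def by simp
qed

lemma finite_decomp:
  "finite {(\<beta>, \<gamma>). \<beta> + \<gamma> = (\<alpha>::nat \<Rightarrow>\<^sub>0 nat)}"
proof -
  let ?D = "{(\<beta>, \<gamma>). \<beta> + \<gamma> = (\<alpha>::nat \<Rightarrow>\<^sub>0 nat)}"
  let ?h = "\<lambda>d::(nat \<Rightarrow>\<^sub>0 nat) \<times> (nat \<Rightarrow>\<^sub>0 nat). \<lambda>i\<in>Poly_Mapping.keys \<alpha>. (Poly_Mapping.lookup (fst d) i, Poly_Mapping.lookup (snd d) i)"
  have "?h ` ?D \<subseteq> PiE (Poly_Mapping.keys \<alpha>) (\<lambda>i. {0..Poly_Mapping.lookup \<alpha> i} \<times> {0..Poly_Mapping.lookup \<alpha> i})"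
    by (auto simp: lookup_add)
  moreover have "finite (PiE (Poly_Mapping.keys \<alpha>) (\<lambda>i. {0..Poly_Mapping.lookup \<alpha> i} \<times> {0..Poly_Mapping.lookup \<alpha> i}))"
    by (rule finite_PiE) (auto simp: finite_keys)
  ultimately have fin: "finite (?h ` ?D)" using finite_subset by blast
  have "inj_on ?h ?D"
  proof (rule inj_onI)
    fix d1 d2 assume d1: "d1 \<in> ?D" and d2: "d2 \<in> ?D" and eq: "?h d1 = ?h d2"
    have "Poly_Mapping.lookup (fst d1) i = Poly_Mapping.lookup (fst d2) i \<and> Poly_Mapping.lookup (snd d1) i = Poly_Mapping.lookup (snd d2) i" for i
    proof (cases "i \<in> Poly_Mapping.keys \<alpha>")
      case True
      then show ?thesis using fun_cong[OF eq, of i] by simp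
    next
      case False
      then have "Poly_Mapping.lookup \<alpha> i = 0" by (simp add: in_keys_iff)
      have e1: "fst d1 + snd d1 = \<alpha>" "fst d2 + snd d2 = \<alpha>" using d1 d2 by auto
      have "Poly_Mapping.lookup (fst d1) i + Poly_Mapping.lookup (snd d1) i = 0"
        "Poly_Mapping.lookup (fst d2) i + Poly_Mapping.lookup (snd d2) i = 0"
        using e1 \<open>Poly_Mapping.lookup \<alpha> i = 0\<close> by (metis lookup_add)+
      then show ?thesis by simp
    qed
    then show "d1 = d2" by (simp add: poly_mapping_eq_iff prod_eq_iff fun_eq_iff)
  qed
  then show ?thesis using fin finite_imageD by blast
qed

lemma sf_mult_card:
  assumes f: "\<And>\<beta>. f \<beta> = of_nat (card {x\<in>A. c1 x = \<beta>})"
    and g: "\<And>\<gamma>. g \<gamma> = of_nat (card {y\<in>B. c2 y = \<gamma>})"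
    and fin1: "\<And>\<beta>. finite {x\<in>A. c1 x = \<beta>}"
    and fin2: "\<And>\<gamma>. finite {y\<in>B. c2 y = \<gamma>}"
  shows "sf_mult f g \<alpha> = of_nat (card {p \<in> A \<times> B. c1 (fst p) + c2 (snd p) = \<alpha>})"
proof -
  define D where "D = {(\<beta>, \<gamma>). \<beta> + \<gamma> = \<alpha>}"
  define F where "F = (\<lambda>d. {x\<in>A. c1 x = fst d} \<times> {y\<in>B. c2 y = snd d})"
  have s1: "sf_mult f g \<alpha> = (\<Sum>d\<in>D. f (fst d) * g (snd d))"
    unfolding sf_mult_def D_def by (rule sum.cong[OF refl]) (simp add: split_beta)
  have s2: "f (fst d) * g (snd d) = of_nat (card (F d))" for d
    unfolding F_def f g by (simp add: card_cartesian_product)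
  have eq1: "card (\<Union>d\<in>D. F d) = (\<Sum>d\<in>D. card (F d))"
  proof (rule card_UN_disjoint)
    show "finite D" unfolding D_def by (rule finite_decomp)
    show "\<forall>d\<in>D. finite (F d)" unfolding F_def using fin1 fin2 by simp
    show "\<forall>d\<in>D. \<forall>j\<in>D. d \<noteq> j \<longrightarrow> F d \<inter> F j = {}"
    proof (intro ballI impI)
      fix d j :: "(nat \<Rightarrow>\<^sub>0 nat) \<times> (nat \<Rightarrow>\<^sub>0 nat)" assume "d \<noteq> j"
      show "F d \<inter> F j = {}"
      proof (rule ccontr)
        assume "F d \<inter> F j \<noteq> {}"
        then obtain x y where "(x, y) \<in> F d" "(x, y) \<in> F j" by auto
        then have "fst d = fst j" "snd d = snd j" unfolding F_def by auto
        then show False using \<open>d \<noteq> j\<close> by (simp add: prod_eq_iff)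
      qed
    qed
  qed
  have eq2: "(\<Union>d\<in>D. F d) = {p \<in> A \<times> B. c1 (fst p) + c2 (snd p) = \<alpha>}"
  proof
    show "(\<Union>d\<in>D. F d) \<subseteq> {p \<in> A \<times> B. c1 (fst p) + c2 (snd p) = \<alpha>}"
      unfolding F_def D_def by (auto simp: mem_Times_iff)
    show "{p \<in> A \<times> B. c1 (fst p) + c2 (snd p) = \<alpha>} \<subseteq> (\<Union>d\<in>D. F d)"
    proof
      fix p assume p: "p \<in> {p \<in> A \<times> B. c1 (fst p) + c2 (snd p) = \<alpha>}"
      show "p \<in> (\<Union>d\<in>D. F d)"
        by (rule UN_I[of "(c1 (fst p), c2 (snd p))"]) (use p in \<open>auto simp: mem_Times_iff F_def D_def\<close>)
    qed
  qed
  have "sf_mult f g \<alpha> = (\<Sum>d\<in>D. of_nat (card (F d)))" using s1 s2 by simp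
  also have "\<dots> = of_nat (\<Sum>d\<in>D. card (F d))" by simp
  also have "\<dots> = of_nat (card {p \<in> A \<times> B. c1 (fst p) + c2 (snd p) = \<alpha>})"
    using eq1 eq2 by simp
  finally show ?thesis .
qed

lemma sf_mult_scale:
  "sf_mult (\<lambda>\<beta>. c * f \<beta>) g \<alpha> = c * sf_mult f g \<alpha>"
proof -
  have "\<And>p. (case p of (\<beta>, \<gamma>) \<Rightarrow> c * f \<beta> * g \<gamma>) = c * (case p of (\<beta>, \<gamma>) \<Rightarrow> f \<beta> * g \<gamma>)"
    by (auto split: prod.split)
  then show ?thesis unfolding sf_mult_def by (simp add: sum_distrib_left)
qed


lemma card_inj_funcset:
  assumes "finite S" "finite T" "card S = card T"
  shows "card {f \<in> S \<rightarrow>\<^sub>E T. inj_on f S} = fact (card S)"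
  using assms
proof (induction S arbitrary: T rule: finite_induct)
  case empty
  then show ?case by (simp add: PiE_empty_domain)
next
  case (insert x S)
  let ?B = "\<lambda>y. {g \<in> S \<rightarrow>\<^sub>E (T - {y}). inj_on g S}"
  have "{f \<in> insert x S \<rightarrow>\<^sub>E T. inj_on f (insert x S)} =
      (\<lambda>(y, g). g(x:=y)) ` {(y, g). y \<in> T \<and> g \<in> S \<rightarrow>\<^sub>E (T - {y}) \<and> inj_on g S}"
    using extensional_funcset_extend_domain_inj_on_eq[OF insert(2), of T] by simp
  then have "card {f \<in> insert x S \<rightarrow>\<^sub>E T. inj_on f (insert x S)} =
      card {(y, g). y \<in> T \<and> g \<in> S \<rightarrow>\<^sub>E (T - {y}) \<and> inj_on g S}"
    using extensional_funcset_extend_domain_inj_onI[OF insert(2), of T] by (simp add: card_image)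
  also have "{(y, g). y \<in> T \<and> g \<in> S \<rightarrow>\<^sub>E (T - {y}) \<and> inj_on g S} = Sigma T ?B"
    by auto
  also have "card (Sigma T ?B) = (\<Sum>y\<in>T. card (?B y))"
  proof (rule card_SigmaI)
    show "finite T" using insert by simp
    show "\<forall>y\<in>T. finite (?B y)"
    proof
      fix y
      have "finite (S \<rightarrow>\<^sub>E (T - {y}))" using insert by (simp add: finite_PiE)
      moreover have "?B y \<subseteq> S \<rightarrow>\<^sub>E (T - {y})" by blast
      ultimately show "finite (?B y)" using finite_subset by blast
    qed
  qed
  also have "\<dots> = (\<Sum>y\<in>T. fact (card S))"
  proof (rule sum.cong)
    fix y assume "y \<in> T"
    then have "card (T - {y}) = card S" using insert by simp
    then show "card (?B y) = fact (card S)" using insert by simp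
  qed simp
  also have "\<dots> = card T * fact (card S)" by simp
  also have "\<dots> = fact (Suc (card S))"
  proof -
    have cT: "card T = Suc (card S)" using insert by simp
    show ?thesis unfolding cT by simp
  qed
  also have "Suc (card S) = card (insert x S)" using insert by simp
  finally show ?case .
qed

lemma proper_attach:
  fixes V0 W :: "'a set" and E E0 :: "'a \<Rightarrow> 'a \<Rightarrow> bool" and u :: 'a
  assumes disj: "V0 \<inter> W = {}" and u: "u \<in> V0"
    and Edef: "\<And>x y. x \<in> V0 \<union> W \<Longrightarrow> y \<in> V0 \<union> W \<Longrightarrow>
       E x y \<longleftrightarrow> ((x \<in> V0 \<and> y \<in> V0 \<and> E0 x y) \<or> (x \<in> insert u W \<and> y \<in> insert u W \<and> x \<noteq> y))"
  shows "\<kappa> \<in> proper_colorings (V0 \<union> W) E \<longleftrightarrow>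
    \<kappa> \<in> (V0 \<union> W) \<rightarrow>\<^sub>E UNIV \<and> restrict \<kappa> V0 \<in> proper_colorings V0 E0 \<and> inj_on \<kappa> W \<and> \<kappa> u \<notin> \<kappa> ` W"
proof
  assume k: "\<kappa> \<in> proper_colorings (V0 \<union> W) E"
  then have k1: "\<kappa> \<in> (V0 \<union> W) \<rightarrow>\<^sub>E UNIV" and
    k2: "\<And>x y. x \<in> V0 \<union> W \<Longrightarrow> y \<in> V0 \<union> W \<Longrightarrow> E x y \<Longrightarrow> \<kappa> x \<noteq> \<kappa> y"
    unfolding proper_colorings_def by auto
  have "restrict \<kappa> V0 \<in> proper_colorings V0 E0"
    unfolding proper_colorings_def using k2 Edef by auto
  moreover have "inj_on \<kappa> W"
  proof (rule inj_onI)
    fix x y assume "x \<in> W" "y \<in> W" "\<kappa> x = \<kappa> y"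
    then show "x = y" using k2[of x y] Edef[of x y] by auto
  qed
  moreover have "\<kappa> u \<notin> \<kappa> ` W"
  proof
    assume "\<kappa> u \<in> \<kappa> ` W"
    then obtain w where w: "w \<in> W" "\<kappa> u = \<kappa> w" by auto
    then have "u \<noteq> w" using disj u by auto
    then show False using k2[of u w] Edef[of u w] w u by auto
  qed
  ultimately show "\<kappa> \<in> (V0 \<union> W) \<rightarrow>\<^sub>E UNIV \<and> restrict \<kappa> V0 \<in> proper_colorings V0 E0 \<and> inj_on \<kappa> W \<and> \<kappa> u \<notin> \<kappa> ` W"
    using k1 by blast
next
  assume k: "\<kappa> \<in> (V0 \<union> W) \<rightarrow>\<^sub>E UNIV \<and> restrict \<kappa> V0 \<in> proper_colorings V0 E0 \<and> inj_on \<kappa> W \<and> \<kappa> u \<notin> \<kappa> ` W"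
  have p0: "\<And>x y. x \<in> V0 \<Longrightarrow> y \<in> V0 \<Longrightarrow> E0 x y \<Longrightarrow> \<kappa> x \<noteq> \<kappa> y"
    using k unfolding proper_colorings_def by auto
  have "\<kappa> x \<noteq> \<kappa> y" if xy: "x \<in> V0 \<union> W" "y \<in> V0 \<union> W" "E x y" for x y
  proof -
    have "(x \<in> V0 \<and> y \<in> V0 \<and> E0 x y) \<or> (x \<in> insert u W \<and> y \<in> insert u W \<and> x \<noteq> y)"
      using Edef xy by blast
    then show ?thesis
    proof
      assume "x \<in> V0 \<and> y \<in> V0 \<and> E0 x y" then show ?thesis using p0 by blast
    next
      assume h: "x \<in> insert u W \<and> y \<in> insert u W \<and> x \<noteq> y"
      show ?thesis
      proof (cases "x = u")
        case True
        then have "y \<in> W" using h by auto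
        then show ?thesis using k True by auto
      next
        case False
        then have x: "x \<in> W" using h by auto
        show ?thesis
        proof (cases "y = u")
          case True
          have "\<kappa> x \<in> \<kappa> ` W" using x by simp
          then show ?thesis using k True by metis
        next
          case False
          then have "y \<in> W" using h by auto
          then show ?thesis using k x h by (auto simp: inj_on_def)
        qed
      qed
    qed
  qed
  then show "\<kappa> \<in> proper_colorings (V0 \<union> W) E"
    unfolding proper_colorings_def using k by auto
qed

lemma finite_fiber_col:
  assumes "finite V"
  shows "finite {\<kappa> \<in> V \<rightarrow>\<^sub>E UNIV. cont V \<kappa> + X = \<alpha>}"
proof -
  have "{\<kappa> \<in> V \<rightarrow>\<^sub>E UNIV. cont V \<kappa> + X = \<alpha>} \<subseteq> V \<rightarrow>\<^sub>E Poly_Mapping.keys \<alpha>"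
  proof
    fix \<kappa> assume "\<kappa> \<in> {\<kappa> \<in> V \<rightarrow>\<^sub>E UNIV. cont V \<kappa> + X = \<alpha>}"
    then have k: "\<kappa> \<in> V \<rightarrow>\<^sub>E UNIV" and c: "cont V \<kappa> + X = \<alpha>" by auto
    show "\<kappa> \<in> V \<rightarrow>\<^sub>E Poly_Mapping.keys \<alpha>"
    proof (rule PiE_I)
      fix v assume "v \<in> V"
      from cont_keys[OF assms this, of \<kappa> X] show "\<kappa> v \<in> Poly_Mapping.keys \<alpha>" unfolding c .
    next
      fix v assume "v \<notin> V"
      with k show "\<kappa> v = undefined" by (rule PiE_arb)
    qed
  qed
  moreover have "finite (V \<rightarrow>\<^sub>E Poly_Mapping.keys \<alpha>)" using assms by (intro finite_PiE) simp_all
  ultimately show ?thesis using finite_subset by blast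
qed

lemma finite_fiber_pair:
  assumes "finite V"
  shows "finite {(\<kappa>, C). \<kappa> \<in> V \<rightarrow>\<^sub>E UNIV \<and> finite C \<and> cont V \<kappa> + ind C = \<alpha>}"
proof -
  have "{(\<kappa>, C). \<kappa> \<in> V \<rightarrow>\<^sub>E UNIV \<and> finite C \<and> cont V \<kappa> + ind C = \<alpha>} \<subseteq>
      (V \<rightarrow>\<^sub>E Poly_Mapping.keys \<alpha>) \<times> Pow (Poly_Mapping.keys \<alpha>)"
  proof
    fix p assume "p \<in> {(\<kappa>, C). \<kappa> \<in> V \<rightarrow>\<^sub>E UNIV \<and> finite C \<and> cont V \<kappa> + ind C = \<alpha>}"
    then obtain \<kappa> C where p: "p = (\<kappa>, C)" and k: "\<kappa> \<in> V \<rightarrow>\<^sub>E UNIV" and fC: "finite C"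
      and c: "cont V \<kappa> + ind C = \<alpha>" by auto
    have "\<kappa> \<in> V \<rightarrow>\<^sub>E Poly_Mapping.keys \<alpha>"
    proof (rule PiE_I)
      fix v assume "v \<in> V"
      from cont_keys[OF assms this, of \<kappa> "ind C"] show "\<kappa> v \<in> Poly_Mapping.keys \<alpha>" unfolding c .
    next
      fix v assume "v \<notin> V"
      with k show "\<kappa> v = undefined" by (rule PiE_arb)
    qed
    moreover have "C \<subseteq> Poly_Mapping.keys \<alpha>"
    proof
      fix c0 assume "c0 \<in> C"
      from ind_keys2[OF fC this, of "cont V \<kappa>"] show "c0 \<in> Poly_Mapping.keys \<alpha>" unfolding c .
    qed
    ultimately show "p \<in> (V \<rightarrow>\<^sub>E Poly_Mapping.keys \<alpha>) \<times> Pow (Poly_Mapping.keys \<alpha>)"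
      using p by blast
  qed
  moreover have "finite ((V \<rightarrow>\<^sub>E Poly_Mapping.keys \<alpha>) \<times> Pow (Poly_Mapping.keys \<alpha>))"
    using assms by (intro finite_cartesian_product finite_PiE) simp_all
  ultimately show ?thesis using finite_subset by blast
qed



lemma clique_attach:
  fixes V0 W :: "'a set" and E E0 :: "'a \<Rightarrow> 'a \<Rightarrow> bool" and u :: 'a
  assumes fV0: "finite V0" and fW: "finite W" and disj: "V0 \<inter> W = {}" and u: "u \<in> V0"
    and Edef: "\<And>x y. x \<in> V0 \<union> W \<Longrightarrow> y \<in> V0 \<union> W \<Longrightarrow>
       E x y \<longleftrightarrow> ((x \<in> V0 \<and> y \<in> V0 \<and> E0 x y) \<or> (x \<in> insert u W \<and> y \<in> insert u W \<and> x \<noteq> y))"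
  shows "card {\<kappa> \<in> proper_colorings (V0 \<union> W) E. cont (V0 \<union> W) \<kappa> = \<alpha>} =
     fact (card W) * card {(\<kappa>0, C). \<kappa>0 \<in> proper_colorings V0 E0 \<and> finite C \<and> card C = card W \<and>
        \<kappa>0 u \<notin> C \<and> cont V0 \<kappa>0 + ind C = \<alpha>}"
proof -
  define L where "L = {\<kappa> \<in> proper_colorings (V0 \<union> W) E. cont (V0 \<union> W) \<kappa> = \<alpha>}"
  define R where "R = {(\<kappa>0, C). \<kappa>0 \<in> proper_colorings V0 E0 \<and> finite C \<and> card C = card W \<and>
        \<kappa>0 u \<notin> C \<and> cont V0 \<kappa>0 + ind C = \<alpha>}"
  define \<Phi> where "\<Phi> = (\<lambda>\<kappa>::'a \<Rightarrow> nat. (restrict \<kappa> V0, \<kappa> ` W))"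
  note PA = proper_attach[OF disj u Edef]
  have fVW: "finite (V0 \<union> W)" using fV0 fW by simp
  have contVW: "cont (V0 \<union> W) \<kappa> = cont V0 \<kappa> + cont W \<kappa>" for \<kappa> :: "'a \<Rightarrow> nat"
    using cont_union[OF fV0 fW disj] .
  have finR: "finite R"
  proof -
    have "R \<subseteq> {(\<kappa>, C). \<kappa> \<in> V0 \<rightarrow>\<^sub>E UNIV \<and> finite C \<and> cont V0 \<kappa> + ind C = \<alpha>}"
      unfolding R_def proper_colorings_def by auto
    then show ?thesis using finite_fiber_pair[OF fV0] finite_subset by blast
  qed
  have finL: "finite L"
  proof -
    have "L \<subseteq> {\<kappa> \<in> (V0 \<union> W) \<rightarrow>\<^sub>E UNIV. cont (V0 \<union> W) \<kappa> + 0 = \<alpha>}"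
      unfolding L_def proper_colorings_def by auto
    then show ?thesis using finite_fiber_col[OF fVW] finite_subset by blast
  qed
  have \<Phi>R: "\<Phi> \<kappa> \<in> R" if "\<kappa> \<in> L" for \<kappa>
  proof -
    from that have kp: "\<kappa> \<in> proper_colorings (V0 \<union> W) E" and kc: "cont (V0 \<union> W) \<kappa> = \<alpha>"
      unfolding L_def by auto
    from kp PA have k2: "restrict \<kappa> V0 \<in> proper_colorings V0 E0" and k3: "inj_on \<kappa> W"
      and k4: "\<kappa> u \<notin> \<kappa> ` W" by auto
    have "cont V0 (restrict \<kappa> V0) + ind (\<kappa> ` W) = \<alpha>"
    proof -
      have "cont V0 (restrict \<kappa> V0) = cont V0 \<kappa>" by (rule cont_cong) simp
      moreover have "cont W \<kappa> = ind (\<kappa> ` W)" by (rule cont_inj[OF fW k3])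
      ultimately show ?thesis using kc contVW[of \<kappa>] by simp
    qed
    moreover have "card (\<kappa> ` W) = card W" using card_image[OF k3] .
    moreover have "restrict \<kappa> V0 u = \<kappa> u" using u by simp
    moreover have "finite (\<kappa> ` W)" using fW by simp
    ultimately show ?thesis unfolding \<Phi>_def R_def using k2 k4 by auto
  qed
  have fib: "card {\<kappa> \<in> L. \<Phi> \<kappa> = r} = fact (card W)" if r: "r \<in> R" for r
  proof -
    obtain \<kappa>0 C where r_eq: "r = (\<kappa>0, C)" by (cases r)
    from r have p0: "\<kappa>0 \<in> proper_colorings V0 E0" and fC: "finite C" and cC: "card C = card W"
      and uC: "\<kappa>0 u \<notin> C" and c0: "cont V0 \<kappa>0 + ind C = \<alpha>"
      unfolding r_eq R_def by auto
    have k0E: "\<kappa>0 \<in> V0 \<rightarrow>\<^sub>E UNIV" using p0 unfolding proper_colorings_def by auto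
    define FS where "FS = {f \<in> W \<rightarrow>\<^sub>E C. inj_on f W}"
    define mg where "mg = (\<lambda>(f::'a \<Rightarrow> nat) v. if v \<in> V0 then \<kappa>0 v else f v)"
    have "bij_betw (\<lambda>\<kappa>. restrict \<kappa> W) {\<kappa> \<in> L. \<Phi> \<kappa> = r} FS"
    proof (rule bij_betw_byWitness[where f' = mg])
      show "\<forall>\<kappa>\<in>{\<kappa> \<in> L. \<Phi> \<kappa> = r}. mg (restrict \<kappa> W) = \<kappa>"
      proof
        fix \<kappa> assume "\<kappa> \<in> {\<kappa> \<in> L. \<Phi> \<kappa> = r}"
        then have kL: "\<kappa> \<in> L" and kr: "restrict \<kappa> V0 = \<kappa>0" "\<kappa> ` W = C"
          unfolding \<Phi>_def r_eq by auto
        have k1: "\<kappa> \<in> (V0 \<union> W) \<rightarrow>\<^sub>E UNIV" using kL unfolding L_def proper_colorings_def by auto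
        show "mg (restrict \<kappa> W) = \<kappa>"
        proof
          fix v
          show "mg (restrict \<kappa> W) v = \<kappa> v"
          proof (cases "v \<in> V0")
            case True
            then show ?thesis unfolding mg_def using fun_cong[OF kr(1), of v] by simp
          next
            case False
            show ?thesis
            proof (cases "v \<in> W")
              case True
              then show ?thesis unfolding mg_def using False by simp
            next
              case F2: False
              have "v \<notin> V0 \<union> W" using False F2 by simp
              then have "\<kappa> v = undefined" by (rule PiE_arb[OF k1])
              then show ?thesis unfolding mg_def using False F2 by simp
            qed
          qed
        qed
      qed
      show "\<forall>f\<in>FS. restrict (mg f) W = f"
      proof
        fix f assume "f \<in> FS"
        then have fE: "f \<in> W \<rightarrow>\<^sub>E C" unfolding FS_def by auto
        show "restrict (mg f) W = f"
        proof
          fix v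
          show "restrict (mg f) W v = f v"
          proof (cases "v \<in> W")
            case True
            then have "v \<notin> V0" using disj by auto
            then show ?thesis using True unfolding mg_def by simp
          next
            case False
            then show ?thesis using PiE_arb[OF fE False] by simp
          qed
        qed
      qed
      show "(\<lambda>\<kappa>. restrict \<kappa> W) ` {\<kappa> \<in> L. \<Phi> \<kappa> = r} \<subseteq> FS"
      proof
        fix f assume "f \<in> (\<lambda>\<kappa>. restrict \<kappa> W) ` {\<kappa> \<in> L. \<Phi> \<kappa> = r}"
        then obtain \<kappa> where kL: "\<kappa> \<in> L" and kr: "\<Phi> \<kappa> = r" and f: "f = restrict \<kappa> W" by auto
        have inj: "inj_on \<kappa> W" using kL PA unfolding L_def by auto
        have img: "\<kappa> ` W = C" using kr unfolding \<Phi>_def r_eq by auto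
        have "f \<in> W \<rightarrow>\<^sub>E C"
          unfolding f using img by auto
        moreover have "inj_on f W" unfolding f using inj by (simp add: inj_on_def)
        ultimately show "f \<in> FS" unfolding FS_def by blast
      qed
      show "mg ` FS \<subseteq> {\<kappa> \<in> L. \<Phi> \<kappa> = r}"
      proof
        fix \<kappa> assume "\<kappa> \<in> mg ` FS"
        then obtain f where fFS: "f \<in> FS" and kdef: "\<kappa> = mg f" by auto
        have fE: "f \<in> W \<rightarrow>\<^sub>E C" and finj: "inj_on f W" using fFS unfolding FS_def by auto
        have fW_img: "f ` W = C"
        proof -
          have "f ` W \<subseteq> C" using fE by auto
          moreover have "card (f ` W) = card C" using card_image[OF finj] cC by simp
          ultimately show ?thesis using fC card_subset_eq by blast
        qed
        have kV0: "\<kappa> v = \<kappa>0 v" if "v \<in> V0" for v using that unfolding kdef mg_def by simp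
        have kW: "\<kappa> v = f v" if "v \<in> W" for v using that disj unfolding kdef mg_def by auto
        have res: "restrict \<kappa> V0 = \<kappa>0"
        proof
          fix v
          show "restrict \<kappa> V0 v = \<kappa>0 v"
          proof (cases "v \<in> V0")
            case True
            then show ?thesis using kV0 by simp
          next
            case False
            then show ?thesis using PiE_arb[OF k0E False] by simp
          qed
        qed
        have kE: "\<kappa> \<in> (V0 \<union> W) \<rightarrow>\<^sub>E UNIV"
        proof (rule PiE_I)
          fix v assume v: "v \<notin> V0 \<union> W"
          then have "f v = undefined" using PiE_arb[OF fE] by simp
          then show "\<kappa> v = undefined" unfolding kdef mg_def using v by simp
        qed simp
        have kimg: "\<kappa> ` W = C" using kW fW_img by (metis image_cong)
        have kinj: "inj_on \<kappa> W" using finj kW by (metis inj_on_cong)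
        have "\<kappa> u \<notin> \<kappa> ` W" using kimg kV0[OF u] uC by simp
        then have kp: "\<kappa> \<in> proper_colorings (V0 \<union> W) E" using PA kE res p0 kinj by auto
        have "cont (V0 \<union> W) \<kappa> = \<alpha>"
        proof -
          have "cont V0 \<kappa> = cont V0 \<kappa>0" by (rule cont_cong) (simp add: kV0)
          moreover have "cont W \<kappa> = ind C" using cont_inj[OF fW kinj] kimg by simp
          ultimately show ?thesis using contVW[of \<kappa>] c0 by simp
        qed
        then show "\<kappa> \<in> {\<kappa> \<in> L. \<Phi> \<kappa> = r}" unfolding L_def \<Phi>_def r_eq using kp res kimg by simp
      qed
    qed
    then have "card {\<kappa> \<in> L. \<Phi> \<kappa> = r} = card FS" by (rule bij_betw_same_card)
    also have "card FS = fact (card W)" unfolding FS_def using card_inj_funcset[OF fW fC cC[symmetric]] .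
    finally show ?thesis .
  qed
  have LU: "L = (\<Union>r\<in>R. {\<kappa> \<in> L. \<Phi> \<kappa> = r})" using \<Phi>R by blast
  have "card (\<Union>r\<in>R. {\<kappa> \<in> L. \<Phi> \<kappa> = r}) = (\<Sum>r\<in>R. card {\<kappa> \<in> L. \<Phi> \<kappa> = r})"
  proof (rule card_UN_disjoint)
    show "finite R" by (rule finR)
    show "\<forall>r\<in>R. finite {\<kappa> \<in> L. \<Phi> \<kappa> = r}" using finL by simp
    show "\<forall>r\<in>R. \<forall>s\<in>R. r \<noteq> s \<longrightarrow> {\<kappa> \<in> L. \<Phi> \<kappa> = r} \<inter> {\<kappa> \<in> L. \<Phi> \<kappa> = s} = {}" by blast
  qed
  also have "\<dots> = (\<Sum>r\<in>R. fact (card W))" using fib by (rule sum.cong[OF refl])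
  also have "\<dots> = fact (card W) * card R" by simp
  finally have "card L = fact (card W) * card R" using LU by simp
  then show ?thesis unfolding L_def R_def .
qed



definition PC :: "nat \<Rightarrow> (nat \<Rightarrow> nat) set" where
  "PC n = proper_colorings (path_V n) path_E"

definition RS :: "nat \<Rightarrow> nat \<Rightarrow> nat \<Rightarrow> (nat \<Rightarrow>\<^sub>0 nat) \<Rightarrow> ((nat \<Rightarrow> nat) \<times> nat set) set" where
  "RS g h k \<alpha> = {(\<kappa>, C). \<kappa> \<in> PC (g+h+1) \<and> finite C \<and> card C = k \<and> \<kappa> g \<notin> C \<and>
      cont {0..<g+h+1} \<kappa> + ind C = \<alpha>}"

definition Aset :: "nat \<Rightarrow> nat \<Rightarrow> (nat \<Rightarrow>\<^sub>0 nat) \<Rightarrow> (nat set \<times> (nat \<Rightarrow> nat)) set" where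
  "Aset n k \<alpha> = {p \<in> {C. finite C \<and> card C = k} \<times> PC n. ind (fst p) + cont {0..<n} (snd p) = \<alpha>}"

definition RSobj :: "nat \<Rightarrow> nat \<Rightarrow> ((nat \<Rightarrow> nat) \<times> nat set) set" where
  "RSobj h k = {(\<kappa>, C). \<kappa> \<in> PC (h+1) \<and> finite C \<and> card C = k \<and> \<kappa> 0 \<notin> C}"

definition Bset :: "nat \<Rightarrow> nat \<Rightarrow> nat \<Rightarrow> (nat \<Rightarrow>\<^sub>0 nat) \<Rightarrow> (((nat \<Rightarrow> nat) \<times> nat set) \<times> (nat \<Rightarrow> nat)) set" where
  "Bset n h k \<alpha> = {p \<in> RSobj h k \<times> PC n.
      (cont {0..<h+1} (fst (fst p)) + ind (snd (fst p))) + cont {0..<n} (snd p) = \<alpha>}"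

definition Tset :: "nat \<Rightarrow> nat \<Rightarrow> nat \<Rightarrow> (nat \<Rightarrow>\<^sub>0 nat) \<Rightarrow> ((nat \<Rightarrow> nat) \<times> nat set) set" where
  "Tset g h k \<alpha> = {(\<kappa>, C). \<kappa> \<in> PC (g+h+1) \<and> finite C \<and> card C = k \<and> \<kappa> g \<notin> C \<and>
      cont {0..<g+h+1} \<kappa> + ind C + Poly_Mapping.single (\<kappa> g) 1 = \<alpha>}"

lemma PC_iff:
  "\<kappa> \<in> PC n \<longleftrightarrow> \<kappa> \<in> {0..<n} \<rightarrow>\<^sub>E UNIV \<and> (\<forall>v. Suc v < n \<longrightarrow> \<kappa> v \<noteq> \<kappa> (Suc v))"
proof -
  have "(\<forall>u\<in>{0..<n}. \<forall>v\<in>{0..<n}. (u + 1 = v \<or> v + 1 = u) \<longrightarrow> \<kappa> u \<noteq> \<kappa> v) \<longleftrightarrow>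
        (\<forall>v. Suc v < n \<longrightarrow> \<kappa> v \<noteq> \<kappa> (Suc v))" (is "?a \<longleftrightarrow> ?b")
  proof
    assume a: ?a
    show ?b
    proof (intro allI impI)
      fix v assume "Suc v < n"
      then have "v \<in> {0..<n}" "Suc v \<in> {0..<n}" by auto
      then show "\<kappa> v \<noteq> \<kappa> (Suc v)" using a by auto
    qed
  next
    assume b: ?b
    show ?a
    proof (intro ballI impI)
      fix u v assume uv: "u \<in> {0..<n}" "v \<in> {0..<n}" "u + 1 = v \<or> v + 1 = u"
      show "\<kappa> u \<noteq> \<kappa> v"
      proof (cases "u + 1 = v")
        case True
        then show ?thesis using b uv by auto
      next
        case False
        then have "v + 1 = u" using uv by auto
        then show ?thesis using b uv by force
      qed
    qed
  qed
  moreover have "\<kappa> \<in> PC n \<longleftrightarrow> \<kappa> \<in> {0..<n} \<rightarrow>\<^sub>E UNIV \<and> ?a"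
    unfolding PC_def proper_colorings_def path_V_def path_E_def by (simp only: mem_Collect_eq)
  ultimately show ?thesis by (simp only:)
qed

lemma PC_ext:
  assumes "\<kappa> \<in> PC n" "n \<le> v"
  shows "\<kappa> v = undefined"
proof -
  have "\<kappa> \<in> {0..<n} \<rightarrow>\<^sub>E UNIV" using assms(1) unfolding PC_iff by blast
  moreover have "v \<notin> {0..<n}" using assms(2) by simp
  ultimately show ?thesis by (rule PiE_arb)
qed

lemma elem_sym_card:
  "elem_sym k \<beta> = of_nat (card {C \<in> {C. finite C \<and> card C = k}. ind C = \<beta>})"
proof (cases "(\<forall>i. Poly_Mapping.lookup \<beta> i \<le> 1) \<and> (\<Sum>i\<in>Poly_Mapping.keys \<beta>. Poly_Mapping.lookup \<beta> i) = k")
  case True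
  have l1: "Poly_Mapping.lookup \<beta> i = 1" if "i \<in> Poly_Mapping.keys \<beta>" for i
    using True that by (metis in_keys_iff le_antisym less_one not_le)
  have ib: "ind (Poly_Mapping.keys \<beta>) = \<beta>"
  proof (rule poly_mapping_eqI)
    fix i
    show "Poly_Mapping.lookup (ind (Poly_Mapping.keys \<beta>)) i = Poly_Mapping.lookup \<beta> i"
      using l1[of i] by (simp add: lookup_ind in_keys_iff)
  qed
  have ck: "card (Poly_Mapping.keys \<beta>) = k"
  proof -
    have "(\<Sum>i\<in>Poly_Mapping.keys \<beta>. Poly_Mapping.lookup \<beta> i) = (\<Sum>i\<in>Poly_Mapping.keys \<beta>. 1)"
      using l1 by (rule sum.cong[OF refl])
    then show ?thesis using True by simp
  qed
  have "{C \<in> {C. finite C \<and> card C = k}. ind C = \<beta>} = {Poly_Mapping.keys \<beta>}"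
  proof
    show "{C \<in> {C. finite C \<and> card C = k}. ind C = \<beta>} \<subseteq> {Poly_Mapping.keys \<beta>}"
    proof
      fix C assume "C \<in> {C \<in> {C. finite C \<and> card C = k}. ind C = \<beta>}"
      then have "finite C" "ind C = \<beta>" by auto
      then have "C = Poly_Mapping.keys \<beta>" using ind_keys by metis
      then show "C \<in> {Poly_Mapping.keys \<beta>}" by simp
    qed
    show "{Poly_Mapping.keys \<beta>} \<subseteq> {C \<in> {C. finite C \<and> card C = k}. ind C = \<beta>}"
      using ib ck by simp
  qed
  then show ?thesis unfolding elem_sym_def using True by simp
next
  case False
  have emp: "{C \<in> {C. finite C \<and> card C = k}. ind C = \<beta>} = {}"
  proof (rule ccontr)
    assume "{C \<in> {C. finite C \<and> card C = k}. ind C = \<beta>} \<noteq> {}"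
    then obtain C where C: "finite C" "card C = k" "ind C = \<beta>" by auto
    have lb: "Poly_Mapping.lookup \<beta> i = (if i \<in> C then 1 else 0)" for i
    proof -
      have "Poly_Mapping.lookup \<beta> i = Poly_Mapping.lookup (ind C) i" using C(3) by simp
      then show ?thesis using C(1) by (simp add: lookup_ind)
    qed
    have "\<forall>i. Poly_Mapping.lookup \<beta> i \<le> 1" using lb by simp
    moreover have "(\<Sum>i\<in>Poly_Mapping.keys \<beta>. Poly_Mapping.lookup \<beta> i) = k"
    proof -
      have "Poly_Mapping.keys \<beta> = C" using C ind_keys by metis
      then have "(\<Sum>i\<in>Poly_Mapping.keys \<beta>. Poly_Mapping.lookup \<beta> i) = (\<Sum>i\<in>C. 1)"
        using lb by simp
      then show ?thesis using C by simp
    qed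
    ultimately show False using False by blast
  qed
  have e: "elem_sym k \<beta> = 0" unfolding elem_sym_def using False by simp
  show ?thesis unfolding e emp by simp
qed

lemma chrom_path: "chrom_sym (path_V n) path_E \<gamma> = of_nat (card {y \<in> PC n. cont {0..<n} y = \<gamma>})"
  using chrom_sym_cont[of "path_V n" path_E \<gamma>] unfolding PC_def path_V_def by simp

lemma fin_PC_fiber: "finite {y \<in> PC n. cont {0..<n} y = \<gamma>}"
proof -
  have "{y \<in> PC n. cont {0..<n} y = \<gamma>} \<subseteq> {\<kappa> \<in> {0..<n} \<rightarrow>\<^sub>E UNIV. cont {0..<n} \<kappa> + 0 = \<gamma>}"
    unfolding PC_iff by auto
  then show ?thesis using finite_fiber_col[of "{0..<n}" 0 \<gamma>] finite_subset by blast
qed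

lemma sf_A:
  "sf_mult (elem_sym k) (chrom_sym (path_V n) path_E) \<alpha> = of_nat (card (Aset n k \<alpha>))"
proof -
  have "sf_mult (elem_sym k) (chrom_sym (path_V n) path_E) \<alpha> =
     of_nat (card {p \<in> {C. finite C \<and> card C = k} \<times> PC n. ind (fst p) + cont {0..<n} (snd p) = \<alpha>})"
  proof (rule sf_mult_card)
    show "elem_sym k \<beta> = of_nat (card {x \<in> {C. finite C \<and> card C = k}. ind x = \<beta>})" for \<beta>
      by (rule elem_sym_card)
    show "chrom_sym (path_V n) path_E \<gamma> = of_nat (card {y \<in> PC n. cont {0..<n} y = \<gamma>})" for \<gamma>
      by (rule chrom_path)
    show "finite {x \<in> {C. finite C \<and> card C = k}. ind x = \<beta>}" for \<beta>
    proof -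
      have "{x \<in> {C. finite C \<and> card C = k}. ind x = \<beta>} \<subseteq> {Poly_Mapping.keys \<beta>}"
        using ind_keys by blast
      then show ?thesis using finite_subset by blast
    qed
    show "finite {y \<in> PC n. cont {0..<n} y = \<gamma>}" for \<gamma> by (rule fin_PC_fiber)
  qed
  then show ?thesis unfolding Aset_def .
qed



lemma spider_RS:
  assumes m: "m \<ge> 1"
  shows "chrom_sym (spider_V g h m) (spider_E g h m) \<alpha> =
    of_nat (fact (m-1)) * of_nat (card (RS g h (m-1) \<alpha>))"
proof -
  define V0 where "V0 = {0..<g+h+1}"
  define W where "W = {g+h+1..<g+h+m}"
  have VW: "spider_V g h m = V0 \<union> W" unfolding spider_V_def V0_def W_def using m by auto
  have cW: "card W = m - 1" unfolding W_def by simp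
  have Edef: "spider_E g h m x y \<longleftrightarrow> ((x \<in> V0 \<and> y \<in> V0 \<and> path_E x y) \<or> (x \<in> insert g W \<and> y \<in> insert g W \<and> x \<noteq> y))"
    if "x \<in> V0 \<union> W" "y \<in> V0 \<union> W" for x y
    unfolding spider_E_def path_E_def V0_def W_def by auto
  have "card {\<kappa> \<in> proper_colorings (V0 \<union> W) (spider_E g h m). cont (V0 \<union> W) \<kappa> = \<alpha>} =
     fact (card W) * card {(\<kappa>0, C). \<kappa>0 \<in> proper_colorings V0 path_E \<and> finite C \<and> card C = card W \<and>
        \<kappa>0 g \<notin> C \<and> cont V0 \<kappa>0 + ind C = \<alpha>}"
    by (rule clique_attach) (auto simp: V0_def W_def Edef)
  also have "{(\<kappa>0, C). \<kappa>0 \<in> proper_colorings V0 path_E \<and> finite C \<and> card C = card W \<and>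
        \<kappa>0 g \<notin> C \<and> cont V0 \<kappa>0 + ind C = \<alpha>} = RS g h (m-1) \<alpha>"
    unfolding RS_def PC_def path_V_def V0_def cW by simp
  finally have "card {\<kappa> \<in> proper_colorings (V0 \<union> W) (spider_E g h m). cont (V0 \<union> W) \<kappa> = \<alpha>} =
     fact (m-1) * card (RS g h (m-1) \<alpha>)" unfolding cW .
  moreover have "finite (V0 \<union> W)" unfolding V0_def W_def by simp
  ultimately show ?thesis unfolding VW by (simp add: chrom_sym_cont)
qed

lemma lollipop_RS:
  assumes z: "z \<ge> 1"
  shows "chrom_sym (lollipop_V z h) (lollipop_E z h) \<beta> =
    of_nat (fact (z-1)) * of_nat (card (RS 0 h (z-1) \<beta>))"
proof -
  define V0 where "V0 = {0..<h+1}"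
  define W where "W = {h+1..<h+z}"
  have VW: "lollipop_V z h = V0 \<union> W" unfolding lollipop_V_def V0_def W_def using z by auto
  have cW: "card W = z - 1" unfolding W_def by simp
  have Edef: "lollipop_E z h x y \<longleftrightarrow> ((x \<in> V0 \<and> y \<in> V0 \<and> path_E x y) \<or> (x \<in> insert 0 W \<and> y \<in> insert 0 W \<and> x \<noteq> y))"
    if "x \<in> V0 \<union> W" "y \<in> V0 \<union> W" for x y
    unfolding lollipop_E_def path_E_def V0_def W_def by auto
  have "card {\<kappa> \<in> proper_colorings (V0 \<union> W) (lollipop_E z h). cont (V0 \<union> W) \<kappa> = \<beta>} =
     fact (card W) * card {(\<kappa>0, C). \<kappa>0 \<in> proper_colorings V0 path_E \<and> finite C \<and> card C = card W \<and>
        \<kappa>0 0 \<notin> C \<and> cont V0 \<kappa>0 + ind C = \<beta>}"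
    by (rule clique_attach) (auto simp: V0_def W_def Edef)
  also have "{(\<kappa>0, C). \<kappa>0 \<in> proper_colorings V0 path_E \<and> finite C \<and> card C = card W \<and>
        \<kappa>0 0 \<notin> C \<and> cont V0 \<kappa>0 + ind C = \<beta>} = RS 0 h (z-1) \<beta>"
    unfolding RS_def PC_def path_V_def V0_def cW by simp
  finally have "card {\<kappa> \<in> proper_colorings (V0 \<union> W) (lollipop_E z h). cont (V0 \<union> W) \<kappa> = \<beta>} =
     fact (z-1) * card (RS 0 h (z-1) \<beta>)" unfolding cW .
  moreover have "finite (V0 \<union> W)" unfolding V0_def W_def by simp
  ultimately show ?thesis unfolding VW by (simp add: chrom_sym_cont)
qed

lemma RS0_fiber: "RS 0 h k \<beta> = {x \<in> RSobj h k. cont {0..<h+1} (fst x) + ind (snd x) = \<beta>}"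
  unfolding RS_def RSobj_def by auto

lemma sf_B:
  assumes z: "z \<ge> 1"
  shows "sf_mult (chrom_sym (lollipop_V z h) (lollipop_E z h)) (chrom_sym (path_V n) path_E) \<alpha> =
    of_nat (fact (z-1)) * of_nat (card (Bset n h (z-1) \<alpha>))"
proof -
  have L: "chrom_sym (lollipop_V z h) (lollipop_E z h) =
     (\<lambda>\<beta>. of_nat (fact (z-1)) * of_nat (card (RS 0 h (z-1) \<beta>)))"
    using lollipop_RS[OF z] by (rule ext)
  have "sf_mult (\<lambda>\<beta>. of_nat (card (RS 0 h (z-1) \<beta>))) (chrom_sym (path_V n) path_E) \<alpha> =
      of_nat (card {p \<in> RSobj h (z-1) \<times> PC n. (cont {0..<h+1} (fst (fst p)) + ind (snd (fst p))) + cont {0..<n} (snd p) = \<alpha>})"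
  proof (rule sf_mult_card)
    show "of_nat (card (RS 0 h (z-1) \<beta>)) = of_nat (card {x \<in> RSobj h (z-1). cont {0..<h+1} (fst x) + ind (snd x) = \<beta>})" for \<beta>
      unfolding RS0_fiber ..
    show "chrom_sym (path_V n) path_E \<gamma> = of_nat (card {y \<in> PC n. cont {0..<n} y = \<gamma>})" for \<gamma>
      by (rule chrom_path)
    show "finite {x \<in> RSobj h (z-1). cont {0..<h+1} (fst x) + ind (snd x) = \<beta>}" for \<beta>
    proof -
      have "{x \<in> RSobj h (z-1). cont {0..<h+1} (fst x) + ind (snd x) = \<beta>} \<subseteq>
          {(\<kappa>, C). \<kappa> \<in> {0..<h+1} \<rightarrow>\<^sub>E UNIV \<and> finite C \<and> cont {0..<h+1} \<kappa> + ind C = \<beta>}"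
        unfolding RSobj_def PC_iff by auto
      then show ?thesis using finite_fiber_pair[of "{0..<h+1}" \<beta>] finite_subset by blast
    qed
    show "finite {y \<in> PC n. cont {0..<n} y = \<gamma>}" for \<gamma> by (rule fin_PC_fiber)
  qed
  then show ?thesis unfolding L sf_mult_scale Bset_def by simp
qed



lemma keys_add_sub:
  fixes a b :: "nat \<Rightarrow>\<^sub>0 nat"
  assumes "a + b = \<alpha>"
  shows "Poly_Mapping.keys a \<subseteq> Poly_Mapping.keys \<alpha>" "Poly_Mapping.keys b \<subseteq> Poly_Mapping.keys \<alpha>"
  using assms by (auto simp: in_keys_iff lookup_add)

lemma cont_keys1:
  assumes "finite V" "v \<in> V"
  shows "\<kappa> v \<in> Poly_Mapping.keys (cont V \<kappa>)"
  using cont_keys[OF assms, of \<kappa> 0] by simp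

lemma PC_keys:
  assumes "\<kappa> \<in> PC n" "Poly_Mapping.keys (cont {0..<n} \<kappa>) \<subseteq> K"
  shows "\<kappa> \<in> {0..<n} \<rightarrow>\<^sub>E K"
proof (rule PiE_I)
  fix v assume "v \<in> {0..<n}"
  then show "\<kappa> v \<in> K" using cont_keys1[of "{0..<n}" v \<kappa>] assms(2) by auto
next
  fix v assume "v \<notin> {0..<n}"
  then show "\<kappa> v = undefined" using PC_ext[OF assms(1)] by simp
qed

lemma ind_keys_sub:
  assumes "finite C" "Poly_Mapping.keys (ind C) \<subseteq> K"
  shows "C \<in> Pow K"
  using assms ind_keys by auto

lemma finite_RS: "finite (RS g h k \<alpha>)"
proof -
  let ?K = "Poly_Mapping.keys \<alpha>"
  have "RS g h k \<alpha> \<subseteq> ({0..<g+h+1} \<rightarrow>\<^sub>E ?K) \<times> Pow ?K"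
  proof
    fix p assume "p \<in> RS g h k \<alpha>"
    then obtain \<kappa> C where p: "p = (\<kappa>, C)" and k: "\<kappa> \<in> PC (g+h+1)" "finite C"
      and c: "cont {0..<g+h+1} \<kappa> + ind C = \<alpha>" unfolding RS_def by auto
    show "p \<in> ({0..<g+h+1} \<rightarrow>\<^sub>E ?K) \<times> Pow ?K"
      using PC_keys[OF k(1) keys_add_sub(1)[OF c]] ind_keys_sub[OF k(2) keys_add_sub(2)[OF c]] p by blast
  qed
  moreover have "finite (({0..<g+h+1} \<rightarrow>\<^sub>E ?K) \<times> Pow ?K)"
    by (intro finite_cartesian_product finite_PiE) simp_all
  ultimately show ?thesis using finite_subset by blast
qed

lemma finite_Tset: "finite (Tset g h k \<alpha>)"
proof -
  let ?K = "Poly_Mapping.keys \<alpha>"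
  have "Tset g h k \<alpha> \<subseteq> ({0..<g+h+1} \<rightarrow>\<^sub>E ?K) \<times> Pow ?K"
  proof
    fix p assume "p \<in> Tset g h k \<alpha>"
    then obtain \<kappa> C where p: "p = (\<kappa>, C)" and k: "\<kappa> \<in> PC (g+h+1)" "finite C"
      and c: "cont {0..<g+h+1} \<kappa> + ind C + Poly_Mapping.single (\<kappa> g) 1 = \<alpha>" unfolding Tset_def by auto
    have c1: "cont {0..<g+h+1} \<kappa> + (ind C + Poly_Mapping.single (\<kappa> g) 1) = \<alpha>" using c by (simp add: add.assoc)
    have c2: "ind C + (cont {0..<g+h+1} \<kappa> + Poly_Mapping.single (\<kappa> g) 1) = \<alpha>" using c by (simp add: add_ac)
    show "p \<in> ({0..<g+h+1} \<rightarrow>\<^sub>E ?K) \<times> Pow ?K"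
      using PC_keys[OF k(1) keys_add_sub(1)[OF c1]] ind_keys_sub[OF k(2) keys_add_sub(1)[OF c2]] p by blast
  qed
  moreover have "finite (({0..<g+h+1} \<rightarrow>\<^sub>E ?K) \<times> Pow ?K)"
    by (intro finite_cartesian_product finite_PiE) simp_all
  ultimately show ?thesis using finite_subset by blast
qed

lemma finite_Aset: "finite (Aset n k \<alpha>)"
proof -
  let ?K = "Poly_Mapping.keys \<alpha>"
  have "Aset n k \<alpha> \<subseteq> Pow ?K \<times> ({0..<n} \<rightarrow>\<^sub>E ?K)"
  proof
    fix p assume "p \<in> Aset n k \<alpha>"
    then obtain \<kappa> C where p: "p = (C, \<kappa>)" and k: "\<kappa> \<in> PC n" "finite C"
      and c: "ind C + cont {0..<n} \<kappa> = \<alpha>" unfolding Aset_def by auto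
    show "p \<in> Pow ?K \<times> ({0..<n} \<rightarrow>\<^sub>E ?K)"
      using PC_keys[OF k(1) keys_add_sub(2)[OF c]] ind_keys_sub[OF k(2) keys_add_sub(1)[OF c]] p by blast
  qed
  moreover have "finite (Pow ?K \<times> ({0..<n} \<rightarrow>\<^sub>E ?K))"
    by (intro finite_cartesian_product finite_PiE) simp_all
  ultimately show ?thesis using finite_subset by blast
qed

lemma finite_Bset: "finite (Bset n h k \<alpha>)"
proof -
  let ?K = "Poly_Mapping.keys \<alpha>"
  have "Bset n h k \<alpha> \<subseteq> (({0..<h+1} \<rightarrow>\<^sub>E ?K) \<times> Pow ?K) \<times> ({0..<n} \<rightarrow>\<^sub>E ?K)"
  proof
    fix p assume "p \<in> Bset n h k \<alpha>"
    then obtain \<kappa>2 C \<kappa>1 where p: "p = ((\<kappa>2, C), \<kappa>1)" and k: "\<kappa>2 \<in> PC (h+1)" "finite C" "\<kappa>1 \<in> PC n"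
      and c: "(cont {0..<h+1} \<kappa>2 + ind C) + cont {0..<n} \<kappa>1 = \<alpha>" unfolding Bset_def RSobj_def by auto
    have c1: "cont {0..<h+1} \<kappa>2 + (ind C + cont {0..<n} \<kappa>1) = \<alpha>" using c by (simp add: add.assoc)
    have c2: "ind C + (cont {0..<h+1} \<kappa>2 + cont {0..<n} \<kappa>1) = \<alpha>" using c by (simp add: add_ac)
    show "p \<in> (({0..<h+1} \<rightarrow>\<^sub>E ?K) \<times> Pow ?K) \<times> ({0..<n} \<rightarrow>\<^sub>E ?K)"
      using PC_keys[OF k(1) keys_add_sub(1)[OF c1]] ind_keys_sub[OF k(2) keys_add_sub(1)[OF c2]]
        PC_keys[OF k(3) keys_add_sub(2)[OF c]] p by blast
  qed
  moreover have "finite ((({0..<h+1} \<rightarrow>\<^sub>E ?K) \<times> Pow ?K) \<times> ({0..<n} \<rightarrow>\<^sub>E ?K))"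
    by (intro finite_cartesian_product finite_PiE) simp_all
  ultimately show ?thesis using finite_subset by blast
qed

lemma split1:
  fixes \<kappa> :: "nat \<Rightarrow> nat"
  shows "cont {0..<g+h+1} \<kappa> + Poly_Mapping.single (\<kappa> g) 1 =
    cont {0..<g+1} \<kappa> + cont {0..<h+1} (\<lambda>v. \<kappa> (v + g))"
proof -
  have e1: "{0..<g+h+1} = {0..<g} \<union> (\<lambda>v. v + g) ` {0..<h+1}"
  proof
    show "{0..<g+h+1} \<subseteq> {0..<g} \<union> (\<lambda>v. v + g) ` {0..<h+1}"
    proof
      fix x assume x: "x \<in> {0..<g+h+1}"
      show "x \<in> {0..<g} \<union> (\<lambda>v. v + g) ` {0..<h+1}"
      proof (cases "x < g")
        case True then show ?thesis by simp
      next
        case False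
        then have "x = (x - g) + g" "x - g \<in> {0..<h+1}" using x by auto
        then show ?thesis by blast
      qed
    qed
    show "{0..<g} \<union> (\<lambda>v. v + g) ` {0..<h+1} \<subseteq> {0..<g+h+1}" by auto
  qed
  have d1: "{0..<g} \<inter> (\<lambda>v. v + g) ` {0..<h+1} = {}" by auto
  have i1: "inj_on (\<lambda>v. v + g) {0..<h+1}" by (simp add: inj_on_def)
  have u1: "cont ({0..<g} \<union> (\<lambda>v. v + g) ` {0..<h+1}) \<kappa> = cont {0..<g} \<kappa> + cont ((\<lambda>v. v + g) ` {0..<h+1}) \<kappa>"
    by (rule cont_union[OF _ _ d1]) simp_all
  have u2: "cont ((\<lambda>v. v + g) ` {0..<h+1}) \<kappa> = cont {0..<h+1} (\<lambda>v. \<kappa> (v + g))"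
    by (rule cont_image[OF _ i1]) simp
  have "cont {0..<g+h+1} \<kappa> = cont {0..<g} \<kappa> + cont {0..<h+1} (\<lambda>v. \<kappa> (v + g))"
    unfolding e1 u1 u2 ..
  moreover have "cont {0..<g+1} \<kappa> = cont {0..<g} \<kappa> + Poly_Mapping.single (\<kappa> g) 1"
  proof -
    have "{0..<g+1} = insert g {0..<g}" by auto
    then show ?thesis using cont_insert[of "{0..<g}" g \<kappa>] by simp
  qed
  ultimately show ?thesis by (simp add: add_ac)
qed

lemma split2:
  fixes \<kappa> :: "nat \<Rightarrow> nat"
  shows "cont {0..<Suc g+h+1} \<kappa> = cont {0..<g+1} \<kappa> + cont {0..<h+1} (\<lambda>v. \<kappa> (v + Suc g))"
proof -
  have e1: "{0..<Suc g+h+1} = {0..<g+1} \<union> (\<lambda>v. v + Suc g) ` {0..<h+1}"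
  proof
    show "{0..<Suc g+h+1} \<subseteq> {0..<g+1} \<union> (\<lambda>v. v + Suc g) ` {0..<h+1}"
    proof
      fix x assume x: "x \<in> {0..<Suc g+h+1}"
      show "x \<in> {0..<g+1} \<union> (\<lambda>v. v + Suc g) ` {0..<h+1}"
      proof (cases "x < g + 1")
        case True then show ?thesis by simp
      next
        case False
        then have "x = (x - Suc g) + Suc g" "x - Suc g \<in> {0..<h+1}" using x by auto
        then show ?thesis by blast
      qed
    qed
    show "{0..<g+1} \<union> (\<lambda>v. v + Suc g) ` {0..<h+1} \<subseteq> {0..<Suc g+h+1}" by auto
  qed
  have d1: "{0..<g+1} \<inter> (\<lambda>v. v + Suc g) ` {0..<h+1} = {}" by auto
  have i1: "inj_on (\<lambda>v. v + Suc g) {0..<h+1}" by (simp add: inj_on_def)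
  have u1: "cont ({0..<g+1} \<union> (\<lambda>v. v + Suc g) ` {0..<h+1}) \<kappa> = cont {0..<g+1} \<kappa> + cont ((\<lambda>v. v + Suc g) ` {0..<h+1}) \<kappa>"
    by (rule cont_union[OF _ _ d1]) simp_all
  have u2: "cont ((\<lambda>v. v + Suc g) ` {0..<h+1}) \<kappa> = cont {0..<h+1} (\<lambda>v. \<kappa> (v + Suc g))"
    by (rule cont_image[OF _ i1]) simp
  show ?thesis
    unfolding e1 u1 u2 ..
qed



lemma R1:
  "card (Aset (g+h+1) k \<alpha>) = card (RS g h k \<alpha>) + card {p \<in> Aset (g+h+1) k \<alpha>. snd p g \<in> fst p}"
proof -
  let ?A = "Aset (g+h+1) k \<alpha>"
  have fin: "finite ?A" by (rule finite_Aset)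
  have eq: "?A = {p\<in>?A. snd p g \<notin> fst p} \<union> {p\<in>?A. snd p g \<in> fst p}" by blast
  have "card ({p\<in>?A. snd p g \<notin> fst p} \<union> {p\<in>?A. snd p g \<in> fst p}) =
      card {p\<in>?A. snd p g \<notin> fst p} + card {p\<in>?A. snd p g \<in> fst p}"
    by (rule card_Un_disjoint) (use fin in auto)
  then have c1: "card ?A = card {p\<in>?A. snd p g \<notin> fst p} + card {p\<in>?A. snd p g \<in> fst p}"
    using eq by simp
  have "bij_betw prod.swap {p\<in>?A. snd p g \<notin> fst p} (RS g h k \<alpha>)"
  proof (rule bij_betw_byWitness[where f' = prod.swap])
    show "\<forall>a\<in>{p\<in>?A. snd p g \<notin> fst p}. prod.swap (prod.swap a) = a" by simp
    show "\<forall>a\<in>RS g h k \<alpha>. prod.swap (prod.swap a) = a" by simp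
    show "prod.swap ` {p\<in>?A. snd p g \<notin> fst p} \<subseteq> RS g h k \<alpha>"
    proof
      fix q assume "q \<in> prod.swap ` {p\<in>?A. snd p g \<notin> fst p}"
      then obtain C \<kappa> where q: "q = (\<kappa>, C)" and p: "(C, \<kappa>) \<in> ?A" "\<kappa> g \<notin> C" by auto
      from p(1) have "finite C" "card C = k" "\<kappa> \<in> PC (g+h+1)" "ind C + cont {0..<g+h+1} \<kappa> = \<alpha>"
        unfolding Aset_def by auto
      then show "q \<in> RS g h k \<alpha>" unfolding q RS_def using p(2) by (simp add: add.commute)
    qed
    show "prod.swap ` RS g h k \<alpha> \<subseteq> {p\<in>?A. snd p g \<notin> fst p}"
    proof
      fix q assume "q \<in> prod.swap ` RS g h k \<alpha>"
      then obtain C \<kappa> where q: "q = (C, \<kappa>)" and p: "(\<kappa>, C) \<in> RS g h k \<alpha>" by auto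
      from p have "finite C" "card C = k" "\<kappa> \<in> PC (g+h+1)" "cont {0..<g+h+1} \<kappa> + ind C = \<alpha>" "\<kappa> g \<notin> C"
        unfolding RS_def by auto
      then show "q \<in> {p\<in>?A. snd p g \<notin> fst p}" unfolding q Aset_def by (simp add: add.commute)
    qed
  qed
  then have "card {p\<in>?A. snd p g \<notin> fst p} = card (RS g h k \<alpha>)" by (rule bij_betw_same_card)
  then show ?thesis using c1 by simp
qed

lemma R1_zero: "{p \<in> Aset n 0 \<alpha>. snd p g \<in> fst p} = {}"
  unfolding Aset_def by auto

lemma R1_Suc:
  "card {p \<in> Aset (g+h+1) (Suc k) \<alpha>. snd p g \<in> fst p} = card (Tset g h k \<alpha>)"
proof -
  let ?S = "{p \<in> Aset (g+h+1) (Suc k) \<alpha>. snd p g \<in> fst p}"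
  define F where "F = (\<lambda>(C::nat set, \<kappa>::nat \<Rightarrow> nat). (\<kappa>, C - {\<kappa> g}))"
  define G where "G = (\<lambda>(\<kappa>::nat \<Rightarrow> nat, C::nat set). (insert (\<kappa> g) C, \<kappa>))"
  have "bij_betw F ?S (Tset g h k \<alpha>)"
  proof (rule bij_betw_byWitness[where f' = G])
    show "\<forall>a\<in>?S. G (F a) = a"
    proof
      fix a assume "a \<in> ?S"
      then obtain C \<kappa> where a: "a = (C, \<kappa>)" "\<kappa> g \<in> C" by (cases a) auto
      then show "G (F a) = a" unfolding F_def G_def by (simp add: insert_absorb)
    qed
    show "\<forall>a\<in>Tset g h k \<alpha>. F (G a) = a"
    proof
      fix a assume "a \<in> Tset g h k \<alpha>"
      then obtain C \<kappa> where a: "a = (\<kappa>, C)" "\<kappa> g \<notin> C" unfolding Tset_def by auto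
      then show "F (G a) = a" unfolding F_def G_def by simp
    qed
    show "F ` ?S \<subseteq> Tset g h k \<alpha>"
    proof
      fix q assume "q \<in> F ` ?S"
      then obtain C \<kappa> where q: "q = (\<kappa>, C - {\<kappa> g})" and p: "(C, \<kappa>) \<in> Aset (g+h+1) (Suc k) \<alpha>" "\<kappa> g \<in> C"
        unfolding F_def by auto
      from p(1) have fC: "finite C" and cC: "card C = Suc k" and kP: "\<kappa> \<in> PC (g+h+1)"
        and c: "ind C + cont {0..<g+h+1} \<kappa> = \<alpha>"
        unfolding Aset_def by auto
      have Ci: "C = insert (\<kappa> g) (C - {\<kappa> g})" using p(2) by auto
      have "ind C = ind (C - {\<kappa> g}) + Poly_Mapping.single (\<kappa> g) 1"
        by (subst Ci, rule ind_insert) (use fC in auto)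
      then have "cont {0..<g+h+1} \<kappa> + ind (C - {\<kappa> g}) + Poly_Mapping.single (\<kappa> g) 1 = \<alpha>"
        using c by (simp add: add_ac)
      moreover have "card (C - {\<kappa> g}) = k" using cC p(2) fC by simp
      ultimately show "q \<in> Tset g h k \<alpha>" unfolding q Tset_def using fC kP by simp
    qed
    show "G ` Tset g h k \<alpha> \<subseteq> ?S"
    proof
      fix q assume "q \<in> G ` Tset g h k \<alpha>"
      then obtain C \<kappa> where q: "q = (insert (\<kappa> g) C, \<kappa>)" and p: "(\<kappa>, C) \<in> Tset g h k \<alpha>"
        unfolding G_def by auto
      from p have fC: "finite C" and cC: "card C = k" and kP: "\<kappa> \<in> PC (g+h+1)" and nC: "\<kappa> g \<notin> C"
        and c: "cont {0..<g+h+1} \<kappa> + ind C + Poly_Mapping.single (\<kappa> g) 1 = \<alpha>"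
        unfolding Tset_def by auto
      have "ind (insert (\<kappa> g) C) = ind C + Poly_Mapping.single (\<kappa> g) 1"
        by (rule ind_insert[OF fC nC])
      then have "ind (insert (\<kappa> g) C) + cont {0..<g+h+1} \<kappa> = \<alpha>" using c by (simp add: add_ac)
      moreover have "card (insert (\<kappa> g) C) = Suc k" using cC nC fC by simp
      ultimately show "q \<in> ?S" unfolding q Aset_def using fC kP by simp
    qed
  qed
  then show ?thesis by (rule bij_betw_same_card)
qed



lemma PC_I:
  assumes "\<And>v. n \<le> v \<Longrightarrow> \<kappa> v = undefined" "\<And>v. Suc v < n \<Longrightarrow> \<kappa> v \<noteq> \<kappa> (Suc v)"
  shows "\<kappa> \<in> PC n"
proof -
  have "\<kappa> \<in> {0..<n} \<rightarrow>\<^sub>E UNIV"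
  proof (rule PiE_I)
    fix v assume "v \<notin> {0..<n}"
    then show "\<kappa> v = undefined" using assms(1) by simp
  qed simp
  then show ?thesis unfolding PC_iff using assms(2) by blast
qed

lemma PC_adj: "\<kappa> \<in> PC n \<Longrightarrow> Suc v < n \<Longrightarrow> \<kappa> v \<noteq> \<kappa> (Suc v)"
  unfolding PC_iff by blast

lemma R2a:
  "card {p \<in> Bset (g+1) h k \<alpha>. snd p g = fst (fst p) 0} = card (Tset g h k \<alpha>)"
proof -
  let ?B1 = "{p \<in> Bset (g+1) h k \<alpha>. snd p g = fst (fst p) 0}"
  define F where "F = (\<lambda>((\<kappa>2::nat \<Rightarrow> nat, C::nat set), \<kappa>1::nat \<Rightarrow> nat).
      ((\<lambda>v. if v < g+h+1 then (if v \<le> g then \<kappa>1 v else \<kappa>2 (v - g)) else undefined), C))"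
  define G where "G = (\<lambda>(\<kappa>::nat \<Rightarrow> nat, C::nat set).
      (((\<lambda>v. if v < h+1 then \<kappa> (v + g) else undefined), C), (\<lambda>v. if v < g+1 then \<kappa> v else undefined)))"
  have memB1: "\<kappa>2 \<in> PC (h+1) \<and> finite C \<and> card C = k \<and> \<kappa>2 0 \<notin> C \<and> \<kappa>1 \<in> PC (g+1) \<and>
      (cont {0..<h+1} \<kappa>2 + ind C) + cont {0..<g+1} \<kappa>1 = \<alpha> \<and> \<kappa>1 g = \<kappa>2 0"
    if "((\<kappa>2, C), \<kappa>1) \<in> ?B1" for \<kappa>2 C \<kappa>1
    using that unfolding Bset_def RSobj_def by auto
  have memT: "\<kappa> \<in> PC (g+h+1) \<and> finite C \<and> card C = k \<and> \<kappa> g \<notin> C \<and>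
      cont {0..<g+h+1} \<kappa> + ind C + Poly_Mapping.single (\<kappa> g) 1 = \<alpha>"
    if "(\<kappa>, C) \<in> Tset g h k \<alpha>" for \<kappa> C
    using that unfolding Tset_def by auto
  have "bij_betw F ?B1 (Tset g h k \<alpha>)"
  proof (rule bij_betw_byWitness[where f' = G])
    show "\<forall>a\<in>?B1. G (F a) = a"
    proof
      fix a assume a: "a \<in> ?B1"
      obtain \<kappa>2 C \<kappa>1 where a_eq: "a = ((\<kappa>2, C), \<kappa>1)" by (metis prod.collapse)
      from memB1[of \<kappa>2 C \<kappa>1] a a_eq have k2: "\<kappa>2 \<in> PC (h+1)" and k1: "\<kappa>1 \<in> PC (g+1)"
        and eq0: "\<kappa>1 g = \<kappa>2 0" by auto
      have e2: "(\<lambda>v. if v < h+1 then (if v + g < g+h+1 then (if v + g \<le> g then \<kappa>1 (v + g) else \<kappa>2 (v + g - g)) else undefined) else undefined) = \<kappa>2"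
      proof
        fix v
        show "(if v < h+1 then (if v + g < g+h+1 then (if v + g \<le> g then \<kappa>1 (v + g) else \<kappa>2 (v + g - g)) else undefined) else undefined) = \<kappa>2 v"
        proof (cases "v < h+1")
          case True
          then show ?thesis using eq0 by (cases "v = 0") auto
        next
          case False
          then show ?thesis using PC_ext[OF k2, of v] by simp
        qed
      qed
      have e1: "(\<lambda>v. if v < g+1 then (if v < g+h+1 then (if v \<le> g then \<kappa>1 v else \<kappa>2 (v - g)) else undefined) else undefined) = \<kappa>1"
      proof
        fix v
        show "(if v < g+1 then (if v < g+h+1 then (if v \<le> g then \<kappa>1 v else \<kappa>2 (v - g)) else undefined) else undefined) = \<kappa>1 v"
        proof (cases "v < g+1")
          case True
          then show ?thesis by simp
        next
          case False
          then show ?thesis using PC_ext[OF k1, of v] by simp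
        qed
      qed
      show "G (F a) = a" unfolding a_eq F_def G_def by (simp only: prod.case e1 e2)
    qed
    show "\<forall>a\<in>Tset g h k \<alpha>. F (G a) = a"
    proof
      fix a assume a: "a \<in> Tset g h k \<alpha>"
      obtain \<kappa> C where a_eq: "a = (\<kappa>, C)" by (metis prod.collapse)
      from memT[of \<kappa> C] a a_eq have k: "\<kappa> \<in> PC (g+h+1)" by auto
      have e: "(\<lambda>v. if v < g+h+1 then (if v \<le> g then (if v < g+1 then \<kappa> v else undefined)
            else (if v - g < h+1 then \<kappa> (v - g + g) else undefined)) else undefined) = \<kappa>"
      proof
        fix v
        show "(if v < g+h+1 then (if v \<le> g then (if v < g+1 then \<kappa> v else undefined)
            else (if v - g < h+1 then \<kappa> (v - g + g) else undefined)) else undefined) = \<kappa> v"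
        proof (cases "v < g+h+1")
          case True
          then show ?thesis by auto
        next
          case False
          then show ?thesis using PC_ext[OF k, of v] by simp
        qed
      qed
      show "F (G a) = a" unfolding a_eq F_def G_def by (simp only: prod.case e)
    qed
    show "F ` ?B1 \<subseteq> Tset g h k \<alpha>"
    proof
      fix q assume "q \<in> F ` ?B1"
      then obtain a where a: "a \<in> ?B1" and q: "q = F a" by auto
      obtain \<kappa>2 C \<kappa>1 where a_eq: "a = ((\<kappa>2, C), \<kappa>1)" by (metis prod.collapse)
      from memB1[of \<kappa>2 C \<kappa>1] a a_eq have k2: "\<kappa>2 \<in> PC (h+1)" and k1: "\<kappa>1 \<in> PC (g+1)"
        and eq0: "\<kappa>1 g = \<kappa>2 0" and fC: "finite C" and cC: "card C = k" and nC: "\<kappa>2 0 \<notin> C"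
        and c: "(cont {0..<h+1} \<kappa>2 + ind C) + cont {0..<g+1} \<kappa>1 = \<alpha>" by auto
      define \<kappa> where "\<kappa> = (\<lambda>v. if v < g+h+1 then (if v \<le> g then \<kappa>1 v else \<kappa>2 (v - g)) else undefined)"
      have q_eq: "q = (\<kappa>, C)" unfolding q a_eq F_def \<kappa>_def by simp
      have kP: "\<kappa> \<in> PC (g+h+1)"
      proof (rule PC_I)
        fix v assume "g + h + 1 \<le> v" then show "\<kappa> v = undefined" unfolding \<kappa>_def by simp
      next
        fix v assume v: "Suc v < g + h + 1"
        show "\<kappa> v \<noteq> \<kappa> (Suc v)"
        proof (cases "Suc v \<le> g")
          case True
          then show ?thesis unfolding \<kappa>_def using v PC_adj[OF k1, of v] by simp
        next
          case False
          show ?thesis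
          proof (cases "v = g")
            case True
            then have "Suc 0 < h + 1" using v by simp
            then show ?thesis unfolding \<kappa>_def using True v PC_adj[OF k2, of 0] eq0 by simp
          next
            case False
            then have "v > g" using \<open>\<not> Suc v \<le> g\<close> by simp
            then have "Suc v - g = Suc (v - g)" "Suc (v - g) < h + 1" using v by auto
            then show ?thesis unfolding \<kappa>_def using v \<open>v > g\<close> PC_adj[OF k2, of "v - g"] by simp
          qed
        qed
      qed
      have kg: "\<kappa> g = \<kappa>2 0" unfolding \<kappa>_def using eq0 by simp
      have cg1: "cont {0..<g+1} \<kappa> = cont {0..<g+1} \<kappa>1" by (rule cont_cong) (simp add: \<kappa>_def)
      have cg2: "cont {0..<h+1} (\<lambda>v. \<kappa> (v + g)) = cont {0..<h+1} \<kappa>2"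
      proof (rule cont_cong)
        fix v assume "v \<in> {0..<h+1}"
        then show "\<kappa> (v + g) = \<kappa>2 v" unfolding \<kappa>_def using eq0 by (cases "v = 0") auto
      qed
      have "cont {0..<g+h+1} \<kappa> + ind C + Poly_Mapping.single (\<kappa> g) 1 =
          (cont {0..<g+h+1} \<kappa> + Poly_Mapping.single (\<kappa> g) 1) + ind C" by (simp add: add_ac)
      also have "\<dots> = (cont {0..<g+1} \<kappa>1 + cont {0..<h+1} \<kappa>2) + ind C"
        using split1[of g h \<kappa>] cg1 cg2 by simp
      also have "\<dots> = \<alpha>" using c by (simp add: add_ac)
      finally show "q \<in> Tset g h k \<alpha>" unfolding q_eq Tset_def using kP fC cC nC kg by simp
    qed
    show "G ` Tset g h k \<alpha> \<subseteq> ?B1"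
    proof
      fix q assume "q \<in> G ` Tset g h k \<alpha>"
      then obtain a where a: "a \<in> Tset g h k \<alpha>" and q: "q = G a" by auto
      obtain \<kappa> C where a_eq: "a = (\<kappa>, C)" by (metis prod.collapse)
      from memT[of \<kappa> C] a a_eq have k: "\<kappa> \<in> PC (g+h+1)" and fC: "finite C" and cC: "card C = k"
        and nC: "\<kappa> g \<notin> C" and c: "cont {0..<g+h+1} \<kappa> + ind C + Poly_Mapping.single (\<kappa> g) 1 = \<alpha>" by auto
      define \<kappa>2 where "\<kappa>2 = (\<lambda>v. if v < h+1 then \<kappa> (v + g) else undefined)"
      define \<kappa>1 where "\<kappa>1 = (\<lambda>v. if v < g+1 then \<kappa> v else undefined)"
      have q_eq: "q = ((\<kappa>2, C), \<kappa>1)" unfolding q a_eq G_def \<kappa>1_def \<kappa>2_def by simp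
      have k2: "\<kappa>2 \<in> PC (h+1)"
      proof (rule PC_I)
        fix v assume "h + 1 \<le> v" then show "\<kappa>2 v = undefined" unfolding \<kappa>2_def by simp
      next
        fix v assume v: "Suc v < h + 1"
        then have "Suc (v + g) < g + h + 1" by simp
        then show "\<kappa>2 v \<noteq> \<kappa>2 (Suc v)" unfolding \<kappa>2_def using v PC_adj[OF k, of "v + g"] by simp
      qed
      have k1: "\<kappa>1 \<in> PC (g+1)"
      proof (rule PC_I)
        fix v assume "g + 1 \<le> v" then show "\<kappa>1 v = undefined" unfolding \<kappa>1_def by simp
      next
        fix v assume v: "Suc v < g + 1"
        then have "Suc v < g + h + 1" by simp
        then show "\<kappa>1 v \<noteq> \<kappa>1 (Suc v)" unfolding \<kappa>1_def using v PC_adj[OF k, of v] by simp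
      qed
      have eq0: "\<kappa>1 g = \<kappa>2 0" unfolding \<kappa>1_def \<kappa>2_def by simp
      have n0: "\<kappa>2 0 \<notin> C" unfolding \<kappa>2_def using nC by simp
      have cg1: "cont {0..<g+1} \<kappa>1 = cont {0..<g+1} \<kappa>" by (rule cont_cong) (simp add: \<kappa>1_def)
      have cg2: "cont {0..<h+1} \<kappa>2 = cont {0..<h+1} (\<lambda>v. \<kappa> (v + g))" by (rule cont_cong) (simp add: \<kappa>2_def)
      have "(cont {0..<h+1} \<kappa>2 + ind C) + cont {0..<g+1} \<kappa>1 =
          (cont {0..<g+1} \<kappa> + cont {0..<h+1} (\<lambda>v. \<kappa> (v + g))) + ind C"
        using cg1 cg2 by (simp add: add_ac)
      also have "\<dots> = (cont {0..<g+h+1} \<kappa> + Poly_Mapping.single (\<kappa> g) 1) + ind C"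
        using split1[of g h \<kappa>] by simp
      also have "\<dots> = \<alpha>" using c by (simp add: add_ac)
      finally have cc: "(cont {0..<h+1} \<kappa>2 + ind C) + cont {0..<g+1} \<kappa>1 = \<alpha>" .
      show "q \<in> ?B1" unfolding q_eq Bset_def RSobj_def using k2 k1 fC cC n0 cc eq0 by simp
    qed
  qed
  then show ?thesis by (rule bij_betw_same_card)
qed

lemma R2b:
  "card {p \<in> Bset (g+1) h k \<alpha>. snd p g \<noteq> fst (fst p) 0} = card (RS (Suc g) h k \<alpha>)"
proof -
  let ?B2 = "{p \<in> Bset (g+1) h k \<alpha>. snd p g \<noteq> fst (fst p) 0}"
  define F where "F = (\<lambda>((\<kappa>2::nat \<Rightarrow> nat, C::nat set), \<kappa>1::nat \<Rightarrow> nat).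
      ((\<lambda>v. if v < Suc g+h+1 then (if v \<le> g then \<kappa>1 v else \<kappa>2 (v - Suc g)) else undefined), C))"
  define G where "G = (\<lambda>(\<kappa>::nat \<Rightarrow> nat, C::nat set).
      (((\<lambda>v. if v < h+1 then \<kappa> (v + Suc g) else undefined), C), (\<lambda>v. if v < g+1 then \<kappa> v else undefined)))"
  have memB2: "\<kappa>2 \<in> PC (h+1) \<and> finite C \<and> card C = k \<and> \<kappa>2 0 \<notin> C \<and> \<kappa>1 \<in> PC (g+1) \<and>
      (cont {0..<h+1} \<kappa>2 + ind C) + cont {0..<g+1} \<kappa>1 = \<alpha> \<and> \<kappa>1 g \<noteq> \<kappa>2 0"
    if "((\<kappa>2, C), \<kappa>1) \<in> ?B2" for \<kappa>2 C \<kappa>1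
    using that unfolding Bset_def RSobj_def by auto
  have memR: "\<kappa> \<in> PC (Suc g+h+1) \<and> finite C \<and> card C = k \<and> \<kappa> (Suc g) \<notin> C \<and>
      cont {0..<Suc g+h+1} \<kappa> + ind C = \<alpha>"
    if "(\<kappa>, C) \<in> RS (Suc g) h k \<alpha>" for \<kappa> C
    using that unfolding RS_def by auto
  have "bij_betw F ?B2 (RS (Suc g) h k \<alpha>)"
  proof (rule bij_betw_byWitness[where f' = G])
    show "\<forall>a\<in>?B2. G (F a) = a"
    proof
      fix a assume a: "a \<in> ?B2"
      obtain \<kappa>2 C \<kappa>1 where a_eq: "a = ((\<kappa>2, C), \<kappa>1)" by (metis prod.collapse)
      from memB2[of \<kappa>2 C \<kappa>1] a a_eq have k2: "\<kappa>2 \<in> PC (h+1)" and k1: "\<kappa>1 \<in> PC (g+1)" by auto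
      have e2: "(\<lambda>v. if v < h+1 then (if v + Suc g < Suc g+h+1 then (if v + Suc g \<le> g then \<kappa>1 (v + Suc g) else \<kappa>2 (v + Suc g - Suc g)) else undefined) else undefined) = \<kappa>2"
      proof
        fix v
        show "(if v < h+1 then (if v + Suc g < Suc g+h+1 then (if v + Suc g \<le> g then \<kappa>1 (v + Suc g) else \<kappa>2 (v + Suc g - Suc g)) else undefined) else undefined) = \<kappa>2 v"
        proof (cases "v < h+1")
          case True
          then show ?thesis by simp
        next
          case False
          then show ?thesis using PC_ext[OF k2, of v] by simp
        qed
      qed
      have e1: "(\<lambda>v. if v < g+1 then (if v < Suc g+h+1 then (if v \<le> g then \<kappa>1 v else \<kappa>2 (v - Suc g)) else undefined) else undefined) = \<kappa>1"
      proof
        fix v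
        show "(if v < g+1 then (if v < Suc g+h+1 then (if v \<le> g then \<kappa>1 v else \<kappa>2 (v - Suc g)) else undefined) else undefined) = \<kappa>1 v"
        proof (cases "v < g+1")
          case True
          then show ?thesis by simp
        next
          case False
          then show ?thesis using PC_ext[OF k1, of v] by simp
        qed
      qed
      show "G (F a) = a" unfolding a_eq F_def G_def by (simp only: prod.case e1 e2)
    qed
    show "\<forall>a\<in>RS (Suc g) h k \<alpha>. F (G a) = a"
    proof
      fix a assume a: "a \<in> RS (Suc g) h k \<alpha>"
      obtain \<kappa> C where a_eq: "a = (\<kappa>, C)" by (metis prod.collapse)
      from memR[of \<kappa> C] a a_eq have k: "\<kappa> \<in> PC (Suc g+h+1)" by auto
      have e: "(\<lambda>v. if v < Suc g+h+1 then (if v \<le> g then (if v < g+1 then \<kappa> v else undefined)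
            else (if v - Suc g < h+1 then \<kappa> (v - Suc g + Suc g) else undefined)) else undefined) = \<kappa>"
      proof
        fix v
        show "(if v < Suc g+h+1 then (if v \<le> g then (if v < g+1 then \<kappa> v else undefined)
            else (if v - Suc g < h+1 then \<kappa> (v - Suc g + Suc g) else undefined)) else undefined) = \<kappa> v"
        proof (cases "v < Suc g+h+1")
          case True
          then show ?thesis by auto
        next
          case False
          then show ?thesis using PC_ext[OF k, of v] by simp
        qed
      qed
      show "F (G a) = a" unfolding a_eq F_def G_def by (simp only: prod.case e)
    qed
    show "F ` ?B2 \<subseteq> RS (Suc g) h k \<alpha>"
    proof
      fix q assume "q \<in> F ` ?B2"
      then obtain a where a: "a \<in> ?B2" and q: "q = F a" by auto
      obtain \<kappa>2 C \<kappa>1 where a_eq: "a = ((\<kappa>2, C), \<kappa>1)" by (metis prod.collapse)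
      from memB2[of \<kappa>2 C \<kappa>1] a a_eq have k2: "\<kappa>2 \<in> PC (h+1)" and k1: "\<kappa>1 \<in> PC (g+1)"
        and neq0: "\<kappa>1 g \<noteq> \<kappa>2 0" and fC: "finite C" and cC: "card C = k" and nC: "\<kappa>2 0 \<notin> C"
        and c: "(cont {0..<h+1} \<kappa>2 + ind C) + cont {0..<g+1} \<kappa>1 = \<alpha>" by auto
      define \<kappa> where "\<kappa> = (\<lambda>v. if v < Suc g+h+1 then (if v \<le> g then \<kappa>1 v else \<kappa>2 (v - Suc g)) else undefined)"
      have q_eq: "q = (\<kappa>, C)" unfolding q a_eq F_def \<kappa>_def by simp
      have kP: "\<kappa> \<in> PC (Suc g+h+1)"
      proof (rule PC_I)
        fix v assume "Suc g + h + 1 \<le> v" then show "\<kappa> v = undefined" unfolding \<kappa>_def by simp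
      next
        fix v assume v: "Suc v < Suc g + h + 1"
        show "\<kappa> v \<noteq> \<kappa> (Suc v)"
        proof (cases "Suc v \<le> g")
          case True
          then show ?thesis unfolding \<kappa>_def using v PC_adj[OF k1, of v] by simp
        next
          case False
          show ?thesis
          proof (cases "v = g")
            case True
            then show ?thesis unfolding \<kappa>_def using True v neq0 by simp
          next
            case False
            then have "v > g" using \<open>\<not> Suc v \<le> g\<close> by simp
            then have "Suc v - Suc g = Suc (v - Suc g)" "Suc (v - Suc g) < h + 1" using v by auto
            then show ?thesis unfolding \<kappa>_def using v \<open>v > g\<close> PC_adj[OF k2, of "v - Suc g"] by simp
          qed
        qed
      qed
      have kg: "\<kappa> (Suc g) = \<kappa>2 0" unfolding \<kappa>_def by simp
      have cg1: "cont {0..<g+1} \<kappa> = cont {0..<g+1} \<kappa>1" by (rule cont_cong) (simp add: \<kappa>_def)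
      have cg2: "cont {0..<h+1} (\<lambda>v. \<kappa> (v + Suc g)) = cont {0..<h+1} \<kappa>2"
        by (rule cont_cong) (simp add: \<kappa>_def)
      have "cont {0..<Suc g+h+1} \<kappa> + ind C = (cont {0..<g+1} \<kappa>1 + cont {0..<h+1} \<kappa>2) + ind C"
        using split2[of g h \<kappa>] cg1 cg2 by simp
      also have "\<dots> = \<alpha>" using c by (simp add: add_ac)
      finally show "q \<in> RS (Suc g) h k \<alpha>" unfolding q_eq RS_def using kP fC cC nC kg by simp
    qed
    show "G ` RS (Suc g) h k \<alpha> \<subseteq> ?B2"
    proof
      fix q assume "q \<in> G ` RS (Suc g) h k \<alpha>"
      then obtain a where a: "a \<in> RS (Suc g) h k \<alpha>" and q: "q = G a" by auto
      obtain \<kappa> C where a_eq: "a = (\<kappa>, C)" by (metis prod.collapse)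
      from memR[of \<kappa> C] a a_eq have k: "\<kappa> \<in> PC (Suc g+h+1)" and fC: "finite C" and cC: "card C = k"
        and nC: "\<kappa> (Suc g) \<notin> C" and c: "cont {0..<Suc g+h+1} \<kappa> + ind C = \<alpha>" by auto
      define \<kappa>2 where "\<kappa>2 = (\<lambda>v. if v < h+1 then \<kappa> (v + Suc g) else undefined)"
      define \<kappa>1 where "\<kappa>1 = (\<lambda>v. if v < g+1 then \<kappa> v else undefined)"
      have q_eq: "q = ((\<kappa>2, C), \<kappa>1)" unfolding q a_eq G_def \<kappa>1_def \<kappa>2_def by simp
      have k2: "\<kappa>2 \<in> PC (h+1)"
      proof (rule PC_I)
        fix v assume "h + 1 \<le> v" then show "\<kappa>2 v = undefined" unfolding \<kappa>2_def by simp
      next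
        fix v assume v: "Suc v < h + 1"
        then have "Suc (v + Suc g) < Suc g + h + 1" by simp
        then show "\<kappa>2 v \<noteq> \<kappa>2 (Suc v)" unfolding \<kappa>2_def using v PC_adj[OF k, of "v + Suc g"] by simp
      qed
      have k1: "\<kappa>1 \<in> PC (g+1)"
      proof (rule PC_I)
        fix v assume "g + 1 \<le> v" then show "\<kappa>1 v = undefined" unfolding \<kappa>1_def by simp
      next
        fix v assume v: "Suc v < g + 1"
        then have "Suc v < Suc g + h + 1" by simp
        then show "\<kappa>1 v \<noteq> \<kappa>1 (Suc v)" unfolding \<kappa>1_def using v PC_adj[OF k, of v] by simp
      qed
      have "Suc g < Suc g + h + 1" by simp
      then have neq0: "\<kappa>1 g \<noteq> \<kappa>2 0" unfolding \<kappa>1_def \<kappa>2_def using PC_adj[OF k, of g] by simp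
      have n0: "\<kappa>2 0 \<notin> C" unfolding \<kappa>2_def using nC by simp
      have cg1: "cont {0..<g+1} \<kappa>1 = cont {0..<g+1} \<kappa>" by (rule cont_cong) (simp add: \<kappa>1_def)
      have cg2: "cont {0..<h+1} \<kappa>2 = cont {0..<h+1} (\<lambda>v. \<kappa> (v + Suc g))" by (rule cont_cong) (simp add: \<kappa>2_def)
      have "(cont {0..<h+1} \<kappa>2 + ind C) + cont {0..<g+1} \<kappa>1 =
          (cont {0..<g+1} \<kappa> + cont {0..<h+1} (\<lambda>v. \<kappa> (v + Suc g))) + ind C"
        using cg1 cg2 by (simp add: add_ac)
      also have "\<dots> = cont {0..<Suc g+h+1} \<kappa> + ind C"
        using split2[of g h \<kappa>] by simp
      also have "\<dots> = \<alpha>" using c .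
      finally have cc: "(cont {0..<h+1} \<kappa>2 + ind C) + cont {0..<g+1} \<kappa>1 = \<alpha>" .
      show "q \<in> ?B2" unfolding q_eq Bset_def RSobj_def using k2 k1 fC cC n0 cc neq0 by simp
    qed
  qed
  then show ?thesis by (rule bij_betw_same_card)
qed

lemma R2:
  "card (Bset (g+1) h k \<alpha>) = card (Tset g h k \<alpha>) + card (RS (Suc g) h k \<alpha>)"
proof -
  let ?B = "Bset (g+1) h k \<alpha>"
  have fin: "finite ?B" by (rule finite_Bset)
  have eq: "?B = {p\<in>?B. snd p g = fst (fst p) 0} \<union> {p\<in>?B. snd p g \<noteq> fst (fst p) 0}" by blast
  have "card ({p\<in>?B. snd p g = fst (fst p) 0} \<union> {p\<in>?B. snd p g \<noteq> fst (fst p) 0}) =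
      card {p\<in>?B. snd p g = fst (fst p) 0} + card {p\<in>?B. snd p g \<noteq> fst (fst p) 0}"
    by (rule card_Un_disjoint) (use fin in auto)
  then show ?thesis using eq R2a R2b by simp
qed



lemma unroll:
  "(of_nat (card (RS g h k \<alpha>)) :: rat) =
     (\<Sum>z=0..k. of_nat (card (Aset (g+h+1+k-z) z \<alpha>))) -
     (\<Sum>z=1..k. of_nat (card (Bset (g+1+k-z) h (z-1) \<alpha>)))"
proof (induction k arbitrary: g)
  case 0
  have "card (Aset (g+h+1) 0 \<alpha>) = card (RS g h 0 \<alpha>)"
    using R1[of g h 0 \<alpha>] unfolding R1_zero[of "g+h+1" \<alpha> g] by simp
  then show ?case by simp
next
  case (Suc k)
  have r1: "card (Aset (g+h+1) (Suc k) \<alpha>) = card (RS g h (Suc k) \<alpha>) + card (Tset g h k \<alpha>)"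
    using R1[of g h "Suc k" \<alpha>] R1_Suc[of g h k \<alpha>] by simp
  have r2: "card (Bset (g+1) h k \<alpha>) = card (Tset g h k \<alpha>) + card (RS (Suc g) h k \<alpha>)"
    by (rule R2)
  have "(of_nat (card (RS g h (Suc k) \<alpha>)) :: rat) =
      of_nat (card (Aset (g+h+1) (Suc k) \<alpha>)) - of_nat (card (Bset (g+1) h k \<alpha>)) + of_nat (card (RS (Suc g) h k \<alpha>))"
    using r1 r2 by (simp add: of_nat_add[symmetric] del: of_nat_add)
  also have "\<dots> = of_nat (card (Aset (g+h+1) (Suc k) \<alpha>)) - of_nat (card (Bset (g+1) h k \<alpha>)) +
     ((\<Sum>z=0..k. of_nat (card (Aset (Suc g+h+1+k-z) z \<alpha>))) -
      (\<Sum>z=1..k. of_nat (card (Bset (Suc g+1+k-z) h (z-1) \<alpha>))))"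
    using Suc.IH[of "Suc g"] by simp
  also have "\<dots> = (\<Sum>z=0..Suc k. of_nat (card (Aset (g+h+1+Suc k-z) z \<alpha>))) -
     (\<Sum>z=1..Suc k. of_nat (card (Bset (g+1+Suc k-z) h (z-1) \<alpha>)))"
  proof -
    have sA: "(\<Sum>z=0..Suc k. (of_nat (card (Aset (g+h+1+Suc k-z) z \<alpha>)) :: rat)) =
        (\<Sum>z=0..k. of_nat (card (Aset (Suc g+h+1+k-z) z \<alpha>))) + of_nat (card (Aset (g+h+1) (Suc k) \<alpha>))"
      by (simp add: sum.atLeast0_atMost_Suc)
    have sB: "(\<Sum>z=1..Suc k. (of_nat (card (Bset (g+1+Suc k-z) h (z-1) \<alpha>)) :: rat)) =
        (\<Sum>z=1..k. of_nat (card (Bset (Suc g+1+k-z) h (z-1) \<alpha>))) + of_nat (card (Bset (g+1) h k \<alpha>))"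
      by (simp add: sum.cl_ivl_Suc)
    show ?thesis unfolding sA sB by simp
  qed
  finally show ?case .
qed

theorem corollary4p7:
  fixes g h m :: nat
  assumes "h \<ge> 1" and "m \<ge> 1"
  shows "\<forall>\<alpha>. chrom_sym (spider_V g h m) (spider_E g h m) \<alpha> =
    of_nat (fact (m - 1)) *
      ((\<Sum>z = 0..m-1. sf_mult (elem_sym z) (chrom_sym (path_V (g+h+m-z)) path_E) \<alpha>)
     - (\<Sum>z = 1..m-1. (1 / of_nat (fact (z - 1))) *
          sf_mult (chrom_sym (lollipop_V z h) (lollipop_E z h)) (chrom_sym (path_V (g+m-z)) path_E) \<alpha>))"
proof
  fix \<alpha>
  obtain k where mk: "m = Suc k" using assms(2) by (cases m) auto
  have sA: "(\<Sum>z = 0..m-1. sf_mult (elem_sym z) (chrom_sym (path_V (g+h+m-z)) path_E) \<alpha>) =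
      (\<Sum>z=0..k. of_nat (card (Aset (g+h+1+k-z) z \<alpha>)))"
  proof (rule sum.cong)
    fix z assume "z \<in> {0..k}"
    have "g+h+m-z = g+h+1+k-z" using mk by simp
    then show "sf_mult (elem_sym z) (chrom_sym (path_V (g+h+m-z)) path_E) \<alpha> = of_nat (card (Aset (g+h+1+k-z) z \<alpha>))"
      using sf_A[of z "g+h+m-z" \<alpha>] by simp
  qed (simp add: mk)
  have sB: "(\<Sum>z = 1..m-1. (1 / of_nat (fact (z - 1))) *
          sf_mult (chrom_sym (lollipop_V z h) (lollipop_E z h)) (chrom_sym (path_V (g+m-z)) path_E) \<alpha>) =
      (\<Sum>z=1..k. of_nat (card (Bset (g+1+k-z) h (z-1) \<alpha>)))"
  proof (rule sum.cong)
    fix z assume z: "z \<in> {1..k}"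
    then have z1: "z \<ge> 1" by simp
    have "g+m-z = g+1+k-z" using mk by simp
    moreover have "(of_nat (fact (z-1)) :: rat) \<noteq> 0" by simp
    ultimately show "(1 / of_nat (fact (z - 1))) *
          sf_mult (chrom_sym (lollipop_V z h) (lollipop_E z h)) (chrom_sym (path_V (g+m-z)) path_E) \<alpha> =
        of_nat (card (Bset (g+1+k-z) h (z-1) \<alpha>))"
      using sf_B[OF z1, of h "g+m-z" \<alpha>] by simp
  qed (simp add: mk)
  have "chrom_sym (spider_V g h m) (spider_E g h m) \<alpha> = of_nat (fact k) * of_nat (card (RS g h k \<alpha>))"
    using spider_RS[OF assms(2), of g h \<alpha>] mk by simp
  also have "\<dots> = of_nat (fact (m - 1)) *
      ((\<Sum>z = 0..m-1. sf_mult (elem_sym z) (chrom_sym (path_V (g+h+m-z)) path_E) \<alpha>)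
     - (\<Sum>z = 1..m-1. (1 / of_nat (fact (z - 1))) *
          sf_mult (chrom_sym (lollipop_V z h) (lollipop_E z h)) (chrom_sym (path_V (g+m-z)) path_E) \<alpha>))"
    unfolding sA sB unroll[of g h k \<alpha>] using mk by simp
  finally show "chrom_sym (spider_V g h m) (spider_E g h m) \<alpha> = of_nat (fact (m - 1)) *
      ((\<Sum>z = 0..m-1. sf_mult (elem_sym z) (chrom_sym (path_V (g+h+m-z)) path_E) \<alpha>)
     - (\<Sum>z = 1..m-1. (1 / of_nat (fact (z - 1))) *
          sf_mult (chrom_sym (lollipop_V z h) (lollipop_E z h)) (chrom_sym (path_V (g+m-z)) path_E) \<alpha>))" .
qed

end
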